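(* Let $\rho$ be a monotone risk measure on $\mathcal M$. For $\alpha\in(0,1]$, $\boldsymbol\theta=(\theta_1,\dots,\theta_n)\in(0,\infty)^n$ and $\Lambda\in\mathcal Q_n$, we have $\overline\rho(\mathbf P_{\alpha,\boldsymbol\theta})\le\overline\rho(\Lambda\mathbf P_{\alpha,\boldsymbol\theta})\le\overline\rho(\mathbf P_{\alpha,\Lambda\boldsymbol\theta})$.
   Context: Work on an atomless probability space. $\mathcal M$ is the set of cdfs on $\mathbb{R}$. A risk measure $\rho:\mathcal M\to\mathbb{R}$ is monotone if $\rho(F)\le\rho(G)$ whenever $F\ge G$ pointwise. $\overline\rho(\mathbf F)=\sup\{\rho(H):H\text{ is the cdf of }X_1+\dots+X_n,\ X_i\sim F_i\}$. $P_{\alpha,\theta}(x)=1-(\theta/x)^\alpha$ for $x\ge\theta$ (zero otherwise); $\mathbf P_{\alpha,\boldsymbol\theta}=(P_{\alpha,\theta_1},\dots,P_{\alpha,\theta_n})$. $\mathcal Q_n$ is the set of $n\times n$ doubly stochastic matrices; for $\Lambda=(\Lambda_{ij})\in\mathcal Q_n$, $\Lambda\mathbf F$ is the tuple with $i$-th component $\sum_j\Lambda_{ij}F_j$, and $\Lambda\boldsymbol\theta$ is the usual matrix-vector product. *)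

theory Defs
  imports "HOL-Probability.Probability"
begin

definition is_cdf :: "(real \<Rightarrow> real) \<Rightarrow> bool" where
  "is_cdf F \<longleftrightarrow> mono F \<and> (\<forall>x. continuous (at_right x) F)
     \<and> (F \<longlongrightarrow> 0) at_bot \<and> (F \<longlongrightarrow> 1) at_top"

definition cdf_set :: "(real \<Rightarrow> real) set" where
  "cdf_set = {F. is_cdf F}"

definition monotone_risk :: "((real \<Rightarrow> real) \<Rightarrow> real) \<Rightarrow> bool" where
  "monotone_risk \<rho> \<longleftrightarrow>
     (\<forall>F\<in>cdf_set. \<forall>G\<in>cdf_set. (\<forall>x. G x \<le> F x) \<longrightarrow> \<rho> F \<le> \<rho> G)"

definition atomless :: "'a measure \<Rightarrow> bool" where
  "atomless M \<longleftrightarrow> (\<forall>A\<in>sets M. 0 < measure M A \<longrightarrow>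
     (\<exists>B\<in>sets M. B \<subseteq> A \<and> 0 < measure M B \<and> measure M B < measure M A))"

definition rv_cdf :: "'a measure \<Rightarrow> ('a \<Rightarrow> real) \<Rightarrow> real \<Rightarrow> real" where
  "rv_cdf M X = (\<lambda>x. measure M {\<omega>\<in>space M. X \<omega> \<le> x})"

definition agg_set :: "'a measure \<Rightarrow> nat \<Rightarrow> (nat \<Rightarrow> real \<Rightarrow> real) \<Rightarrow> (real \<Rightarrow> real) set" where
  "agg_set M n F = {rv_cdf M (\<lambda>\<omega>. \<Sum>i<n. X i \<omega>) | X.
      (\<forall>i<n. X i \<in> borel_measurable M \<and> rv_cdf M (X i) = F i)}"

definition worst_rho :: "'a measure \<Rightarrow> ((real \<Rightarrow> real) \<Rightarrow> real) \<Rightarrow> nat \<Rightarrow> (nat \<Rightarrow> real \<Rightarrow> real) \<Rightarrow> ereal" where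
  "worst_rho M \<rho> n F = (SUP H\<in>agg_set M n F. ereal (\<rho> H))"

definition pareto_cdf :: "real \<Rightarrow> real \<Rightarrow> real \<Rightarrow> real" where
  "pareto_cdf \<alpha> \<theta> x = (if x \<ge> \<theta> then 1 - (\<theta> / x) powr \<alpha> else 0)"

definition pareto_tuple :: "real \<Rightarrow> (nat \<Rightarrow> real) \<Rightarrow> nat \<Rightarrow> real \<Rightarrow> real" where
  "pareto_tuple \<alpha> \<theta> = (\<lambda>i. pareto_cdf \<alpha> (\<theta> i))"

definition doubly_stochastic :: "nat \<Rightarrow> (nat \<Rightarrow> nat \<Rightarrow> real) \<Rightarrow> bool" where
  "doubly_stochastic n \<Lambda> \<longleftrightarrow> (\<forall>i<n. \<forall>j<n. 0 \<le> \<Lambda> i j)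
     \<and> (\<forall>i<n. (\<Sum>j<n. \<Lambda> i j) = 1) \<and> (\<forall>j<n. (\<Sum>i<n. \<Lambda> i j) = 1)"

definition mat_cdfs :: "nat \<Rightarrow> (nat \<Rightarrow> nat \<Rightarrow> real) \<Rightarrow> (nat \<Rightarrow> real \<Rightarrow> real) \<Rightarrow> nat \<Rightarrow> real \<Rightarrow> real" where
  "mat_cdfs n \<Lambda> F = (\<lambda>i x. \<Sum>j<n. \<Lambda> i j * F j x)"

definition mat_vec :: "nat \<Rightarrow> (nat \<Rightarrow> nat \<Rightarrow> real) \<Rightarrow> (nat \<Rightarrow> real) \<Rightarrow> nat \<Rightarrow> real" where
  "mat_vec n \<Lambda> v = (\<lambda>i. \<Sum>j<n. \<Lambda> i j * v j)"

end

theory Submission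
  imports Defs
begin


lemma hall:
  fixes A :: "'i \<Rightarrow> 'b set"
  assumes "finite I" "\<forall>i\<in>I. finite (A i)"
    and "\<forall>J\<subseteq>I. card J \<le> card (\<Union>(A ` J))"
  shows "\<exists>f. inj_on f I \<and> (\<forall>i\<in>I. f i \<in> A i)"
  using assms
proof (induction "card I" arbitrary: I A rule: less_induct)
  case less
  show ?case
  proof (cases "I = {}")
    case True then show ?thesis by auto
  next
    case ne: False
    show ?thesis
    proof (cases "\<forall>J. J \<subseteq> I \<and> J \<noteq> {} \<and> J \<noteq> I \<longrightarrow> card J < card (\<Union>(A ` J))")
      case True
      obtain i0 where i0: "i0 \<in> I" using ne by auto
      have "card {i0} \<le> card (\<Union>(A ` {i0}))" using less.prems(3) i0 by blast
      then have "A i0 \<noteq> {}" by auto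
      then obtain x where x: "x \<in> A i0" by auto
      define I' where "I' = I - {i0}"
      define A' where "A' = (\<lambda>i. A i - {x})"
      have cI': "card I' < card I" unfolding I'_def using i0 less.prems(1) by (metis card_Diff1_less)
      have h': "\<forall>J\<subseteq>I'. card J \<le> card (\<Union>(A' ` J))"
      proof (intro allI impI)
        fix J assume J: "J \<subseteq> I'"
        show "card J \<le> card (\<Union>(A' ` J))"
        proof (cases "J = {}")
          case True then show ?thesis by simp
        next
          case False
          have "J \<noteq> I" using J i0 unfolding I'_def by auto
          have "J \<subseteq> I" using J unfolding I'_def by auto
          then have lt: "card J < card (\<Union>(A ` J))" using True False \<open>J \<noteq> I\<close> by blast
          have fin: "finite (\<Union>(A ` J))" using J less.prems(1,2) unfolding I'_def
            by (meson Diff_subset finite_UN_I finite_subset subsetD)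
          have "\<Union>(A' ` J) = \<Union>(A ` J) - {x}" unfolding A'_def by auto
          then have "card (\<Union>(A' ` J)) \<ge> card (\<Union>(A ` J)) - 1"
            using fin by (simp add: card_Diff_singleton_if)
          then show ?thesis using lt by linarith
        qed
      qed
      have "finite I'" unfolding I'_def using less.prems(1) by auto
      moreover have "\<forall>i\<in>I'. finite (A' i)" unfolding A'_def I'_def using less.prems(2) by auto
      ultimately have "\<exists>f. inj_on f I' \<and> (\<forall>i\<in>I'. f i \<in> A' i)"
        using h' by (rule less.hyps[OF cI'])
      then obtain f where f: "inj_on f I'" "\<forall>i\<in>I'. f i \<in> A' i" by blast
      define g where "g = f(i0 := x)"
      have "inj_on g I"
      proof -
        have "I = insert i0 I'" unfolding I'_def using i0 by auto
        moreover have "inj_on g I'" using f(1) unfolding g_def I'_def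
          by (simp add: inj_on_def)
        moreover have "g i0 \<notin> g ` I'" using f(2) unfolding g_def A'_def I'_def by auto
        moreover have "i0 \<notin> I'" unfolding I'_def by auto
        ultimately show ?thesis by (simp add: inj_on_insert)
      qed
      moreover have "\<forall>i\<in>I. g i \<in> A i" using f(2) x unfolding g_def A'_def I'_def by auto
      ultimately show ?thesis by blast
    next
      case False
      then obtain J where J: "J \<subseteq> I" "J \<noteq> {}" "J \<noteq> I" "\<not> card J < card (\<Union>(A ` J))" by blast
      have cJ: "card J = card (\<Union>(A ` J))" using J(1,4) less.prems(3) le_antisym not_less by blast
      have finJ: "finite J" using J(1) less.prems(1) finite_subset by blast
      have ltJ: "card J < card I" using J less.prems(1) by (meson psubsetI psubset_card_mono)
      have "\<exists>f. inj_on f J \<and> (\<forall>i\<in>J. f i \<in> A i)"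
        using finJ _ _ by (rule less.hyps[OF ltJ]) (use J(1) less.prems in auto)
      then obtain f1 where f1: "inj_on f1 J" "\<forall>i\<in>J. f1 i \<in> A i" by blast
      define U where "U = \<Union>(A ` J)"
      define I2 where "I2 = I - J"
      define A2 where "A2 = (\<lambda>i. A i - U)"
      have lt2: "card I2 < card I"
      proof -
        have "card I2 = card I - card J" unfolding I2_def using J(1) finJ by (simp add: card_Diff_subset)
        moreover have "card J > 0" using finJ J(2) by auto
        moreover have "card J \<le> card I" using J(1) less.prems(1) by (simp add: card_mono)
        ultimately show ?thesis by linarith
      qed
      have finU: "finite U" unfolding U_def using finJ J(1) less.prems(2) by auto
      have h2: "\<forall>K\<subseteq>I2. card K \<le> card (\<Union>(A2 ` K))"
      proof (intro allI impI)
        fix K assume K: "K \<subseteq> I2"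
        have finK: "finite K" using K less.prems(1) unfolding I2_def by (meson Diff_subset finite_subset)
        have e: "\<Union>(A2 ` K) = \<Union>(A ` (K \<union> J)) - U" unfolding A2_def U_def by auto
        have sub: "U \<subseteq> \<Union>(A ` (K \<union> J))" unfolding U_def by auto
        have finKJ: "finite (\<Union>(A ` (K \<union> J)))" using finK finJ K J(1) less.prems(2) unfolding I2_def by auto
        have "card (\<Union>(A2 ` K)) = card (\<Union>(A ` (K \<union> J))) - card U"
          unfolding e using sub finKJ by (simp add: card_Diff_subset finite_subset)
        moreover have "card (K \<union> J) \<le> card (\<Union>(A ` (K \<union> J)))"
        proof -
          have "K \<union> J \<subseteq> I" using K J(1) unfolding I2_def by auto
          then show ?thesis using less.prems(3) by blast
        qed
        moreover have "card (K \<union> J) = card K + card J"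
          using finK finJ K unfolding I2_def by (subst card_Un_disjoint) auto
        ultimately show "card K \<le> card (\<Union>(A2 ` K))" using cJ unfolding U_def by linarith
      qed
      have "finite I2" unfolding I2_def using less.prems(1) by auto
      moreover have "\<forall>i\<in>I2. finite (A2 i)" unfolding A2_def I2_def using less.prems(2) by auto
      ultimately have "\<exists>f. inj_on f I2 \<and> (\<forall>i\<in>I2. f i \<in> A2 i)"
        using h2 by (rule less.hyps[OF lt2])
      then obtain f2 where f2: "inj_on f2 I2" "\<forall>i\<in>I2. f2 i \<in> A2 i" by blast
      define g where "g = (\<lambda>i. if i \<in> J then f1 i else f2 i)"
      have "inj_on g I"
        unfolding inj_on_def
      proof (intro ballI impI)
        fix a b assume ab: "a \<in> I" "b \<in> I" "g a = g b"
        show "a = b"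
        proof (cases "a \<in> J"; cases "b \<in> J")
          assume "a \<in> J" "b \<in> J" then show ?thesis using ab f1(1) unfolding g_def inj_on_def by auto
        next
          assume "a \<in> J" "b \<notin> J"
          then have "g a \<in> U" using f1(2) unfolding g_def U_def by auto
          moreover have "g b \<notin> U" using f2(2) ab(1,2) \<open>b \<notin> J\<close> unfolding g_def A2_def I2_def by auto
          ultimately have "g a \<noteq> g b" by metis
          then show ?thesis using ab by auto
        next
          assume "a \<notin> J" "b \<in> J"
          then have "g b \<in> U" using f1(2) unfolding g_def U_def by auto
          moreover have "g a \<notin> U" using f2(2) ab(1,2) \<open>a \<notin> J\<close> unfolding g_def A2_def I2_def by auto
          ultimately have "g a \<noteq> g b" by metis
          then show ?thesis using ab by auto
        next
          assume "a \<notin> J" "b \<notin> J" then show ?thesis using ab f2(1) unfolding g_def inj_on_def I2_def by auto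
        qed
      qed
      moreover have "\<forall>i\<in>I. g i \<in> A i" using f1(2) f2(2) unfolding g_def A2_def I2_def by auto
      ultimately show ?thesis by blast
    qed
  qed
qed


lemma perm_in_support:
  fixes L :: "nat \<Rightarrow> nat \<Rightarrow> real"
  assumes nn: "\<forall>i<n. \<forall>j<n. 0 \<le> L i j" and rs: "\<forall>i<n. (\<Sum>j<n. L i j) = c"
    and cs: "\<forall>j<n. (\<Sum>i<n. L i j) = c" and c: "c > 0"
  shows "\<exists>s. bij_betw s {..<n} {..<n} \<and> (\<forall>i<n. L i (s i) > 0)"
proof -
  define A where "A = (\<lambda>i. {j. j < n \<and> L i j > 0})"
  have hallc: "\<forall>J\<subseteq>{..<n}. card J \<le> card (\<Union>(A ` J))"
  proof (intro allI impI)
    fix J assume J: "J \<subseteq> {..<n}"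
    define N where "N = \<Union>(A ` J)"
    have N: "N \<subseteq> {..<n}" unfolding N_def A_def by auto
    have finJ: "finite J" using J finite_subset by blast
    have finN: "finite N" using N finite_subset by blast
    have "(\<Sum>i\<in>J. (\<Sum>j<n. L i j)) = (\<Sum>i\<in>J. c)" by (rule sum.cong) (use rs J in auto)
    then have "real (card J) * c = (\<Sum>i\<in>J. (\<Sum>j<n. L i j))" by simp
    also have "\<dots> = (\<Sum>i\<in>J. (\<Sum>j\<in>N. L i j))"
    proof (rule sum.cong[OF refl])
      fix i assume i: "i \<in> J"
      have "(\<Sum>j<n. L i j) = (\<Sum>j\<in>N. L i j) + (\<Sum>j\<in>{..<n} - N. L i j)"
        using N by (metis add.commute finite_lessThan sum.subset_diff)
      moreover have "(\<Sum>j\<in>{..<n} - N. L i j) = 0"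
      proof (rule sum.neutral, intro ballI)
        fix j assume j: "j \<in> {..<n} - N"
        then have "\<not> L i j > 0" using i unfolding N_def A_def by auto
        then show "L i j = 0" using nn i J j by force
      qed
      ultimately show "(\<Sum>j<n. L i j) = (\<Sum>j\<in>N. L i j)" by simp
    qed
    also have "\<dots> = (\<Sum>j\<in>N. (\<Sum>i\<in>J. L i j))" by (rule sum.swap)
    also have "\<dots> \<le> (\<Sum>j\<in>N. (\<Sum>i<n. L i j))"
    proof (rule sum_mono)
      fix j assume j: "j \<in> N"
      show "(\<Sum>i\<in>J. L i j) \<le> (\<Sum>i<n. L i j)"
        using J j N nn by (intro sum_mono2) auto
    qed
    also have "\<dots> = (\<Sum>j\<in>N. c)" by (rule sum.cong) (use cs N in auto)
    also have "\<dots> = real (card N) * c" by simp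
    finally have "real (card J) * c \<le> real (card N) * c" .
    then have "real (card J) \<le> real (card N)" using c by simp
    then show "card J \<le> card (\<Union>(A ` J))" unfolding N_def by simp
  qed
  have "\<exists>f. inj_on f {..<n} \<and> (\<forall>i\<in>{..<n}. f i \<in> A i)"
    by (rule hall) (use hallc in \<open>auto simp: A_def\<close>)
  then obtain s where s: "inj_on s {..<n}" "\<forall>i\<in>{..<n}. s i \<in> A i" by blast
  have img: "s ` {..<n} \<subseteq> {..<n}" using s(2) unfolding A_def by auto
  have "s ` {..<n} = {..<n}"
    using img s(1) by (simp add: card_image card_subset_eq)
  then have "bij_betw s {..<n} {..<n}" using s(1) by (simp add: bij_betw_def)
  moreover have "\<forall>i<n. L i (s i) > 0" using s(2) unfolding A_def by auto
  ultimately show ?thesis by blast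
qed

lemma birkhoff:
  fixes L :: "nat \<Rightarrow> nat \<Rightarrow> real"
  assumes "\<forall>i<n. \<forall>j<n. 0 \<le> L i j" "\<forall>i<n. (\<Sum>j<n. L i j) = c" "\<forall>j<n. (\<Sum>i<n. L i j) = c"
  shows "\<exists>(m::nat) w p. (\<forall>k<m. 0 \<le> w k \<and> bij_betw (p k) {..<n} {..<n}) \<and>
     (\<forall>i<n. \<forall>j<n. L i j = (\<Sum>k<m. w k * (if p k i = j then 1 else 0)))"
  using assms
proof (induction "card {(i,j). i < n \<and> j < n \<and> L i j \<noteq> 0}" arbitrary: L c rule: less_induct)
  case less
  show ?case
  proof (cases "\<forall>i<n. \<forall>j<n. L i j = 0")
    case True
    show ?thesis apply (rule exI[where x="0::nat"]) using True by auto
  next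
    case False
    then obtain i0 j0 where ij0: "i0 < n" "j0 < n" "L i0 j0 \<noteq> 0" by blast
    have pos0: "L i0 j0 > 0" using ij0 less.prems(1) by force
    have "L i0 j0 \<le> (\<Sum>j<n. L i0 j)"
      using ij0 less.prems(1) by (intro member_le_sum) auto
    then have cpos: "c > 0" using less.prems(2) ij0 pos0 by auto
    obtain s where s: "bij_betw s {..<n} {..<n}" "\<forall>i<n. L i (s i) > 0"
      using perm_in_support[OF less.prems cpos] by blast
    define T where "T = (\<lambda>i. L i (s i)) ` {..<n}"
    have finT: "finite T" "T \<noteq> {}" unfolding T_def using ij0 by auto
    define t where "t = Min T"
    obtain im where im: "im < n" "t = L im (s im)"
      using Min_in[OF finT] unfolding t_def T_def by auto
    have tle: "\<forall>i<n. t \<le> L i (s i)" unfolding t_def T_def using finT by auto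
    have tpos: "t > 0" using im s(2) by auto
    define P where "P = (\<lambda>i j. if s i = j then 1 else (0::real))"
    define L' where "L' = (\<lambda>i j. L i j - t * P i j)"
    have colP: "\<forall>j<n. (\<Sum>i<n. P i j) = 1"
    proof (intro allI impI)
      fix j assume j: "j < n"
      have "(\<Sum>i<n. P i j) = (\<Sum>x<n. (if x = j then 1 else (0::real)))"
        unfolding P_def using sum.reindex_bij_betw[OF s(1), of "\<lambda>x. if x = j then 1 else (0::real)"] by simp
      also have "\<dots> = 1" using j by simp
      finally show "(\<Sum>i<n. P i j) = 1" .
    qed
    have rowP: "\<forall>i<n. (\<Sum>j<n. P i j) = 1"
    proof (intro allI impI)
      fix i assume i: "i < n"
      then have "s i < n" using s(1) bij_betwE by blast
      then show "(\<Sum>j<n. P i j) = 1" unfolding P_def by (simp add: sum.delta)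
    qed
    have nn': "\<forall>i<n. \<forall>j<n. 0 \<le> L' i j"
      unfolding L'_def P_def using tle less.prems(1) by auto
    have rs': "\<forall>i<n. (\<Sum>j<n. L' i j) = c - t"
      unfolding L'_def using less.prems(2) rowP by (simp add: sum_subtractf sum_distrib_left[symmetric])
    have cs': "\<forall>j<n. (\<Sum>i<n. L' i j) = c - t"
      unfolding L'_def using less.prems(3) colP by (simp add: sum_subtractf sum_distrib_left[symmetric])
    have sub: "{(i,j). i < n \<and> j < n \<and> L' i j \<noteq> 0} \<subseteq> {(i,j). i < n \<and> j < n \<and> L i j \<noteq> 0} - {(im, s im)}"
    proof
      fix x assume x: "x \<in> {(i,j). i < n \<and> j < n \<and> L' i j \<noteq> 0}"
      obtain i j where x': "x = (i,j)" "i < n" "j < n" "L' i j \<noteq> 0" using x by auto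
      have "L i j \<noteq> 0"
      proof
        assume "L i j = 0"
        then have "s i \<noteq> j" using s(2) x' by auto
        then show False using x' \<open>L i j = 0\<close> unfolding L'_def P_def by auto
      qed
      moreover have "(i,j) \<noteq> (im, s im)" using x' im unfolding L'_def P_def by auto
      ultimately show "x \<in> {(i,j). i < n \<and> j < n \<and> L i j \<noteq> 0} - {(im, s im)}" using x' by auto
    qed
    have finS: "finite {(i,j). i < n \<and> j < n \<and> L i j \<noteq> 0}"
      by (rule finite_subset[of _ "{..<n} \<times> {..<n}"]) auto
    have memS: "(im, s im) \<in> {(i,j). i < n \<and> j < n \<and> L i j \<noteq> 0}"
      using im s bij_betwE by fastforce
    have lt: "card {(i,j). i < n \<and> j < n \<and> L' i j \<noteq> 0} < card {(i,j). i < n \<and> j < n \<and> L i j \<noteq> 0}"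
    proof -
      have "card {(i,j). i < n \<and> j < n \<and> L' i j \<noteq> 0} \<le> card ({(i,j). i < n \<and> j < n \<and> L i j \<noteq> 0} - {(im, s im)})"
        using sub finS by (intro card_mono) auto
      also have "\<dots> < card {(i,j). i < n \<and> j < n \<and> L i j \<noteq> 0}"
        using finS memS by (rule card_Diff1_less)
      finally show ?thesis .
    qed
    obtain m :: nat and w p where wp: "\<forall>k<m. 0 \<le> w k \<and> bij_betw (p k) {..<n} {..<n}"
      "\<forall>i<n. \<forall>j<n. L' i j = (\<Sum>k<m. w k * (if p k i = j then 1 else 0))"
      using less.hyps[OF lt nn' rs' cs'] by blast
    define w2 where "w2 = w(m := t)"
    define p2 where "p2 = p(m := s)"
    have "\<forall>k<Suc m. 0 \<le> w2 k \<and> bij_betw (p2 k) {..<n} {..<n}"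
      using wp(1) tpos s(1) unfolding w2_def p2_def by (auto simp: less_Suc_eq)
    moreover have "\<forall>i<n. \<forall>j<n. L i j = (\<Sum>k<Suc m. w2 k * (if p2 k i = j then 1 else 0))"
    proof (intro allI impI)
      fix i j assume ij: "i < n" "j < n"
      have "(\<Sum>k<Suc m. w2 k * (if p2 k i = j then 1 else 0)) =
          (\<Sum>k<m. w k * (if p k i = j then 1 else 0)) + t * P i j"
        unfolding w2_def p2_def P_def by (simp add: sum.lessThan_Suc)
      also have "\<dots> = L i j" using wp(2) ij unfolding L'_def by (metis diff_add_cancel)
      finally show "L i j = (\<Sum>k<Suc m. w2 k * (if p2 k i = j then 1 else 0))" by simp
    qed
    ultimately show ?thesis by blast
  qed
qed


lemma rv_cdf_eq_cdf:
  assumes "X \<in> borel_measurable M"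
  shows "rv_cdf M X = cdf (distr M borel X)"
proof
  fix x
  have "{\<omega>\<in>space M. X \<omega> \<le> x} = X -` {..x} \<inter> space M" by auto
  then show "rv_cdf M X x = cdf (distr M borel X) x"
    unfolding rv_cdf_def cdf_def using assms by (simp add: measure_distr)
qed

lemma rv_cdf_is_cdf:
  assumes "prob_space M" "X \<in> borel_measurable M"
  shows "rv_cdf M X \<in> cdf_set"
proof -
  interpret real_distribution "distr M borel X"
    using assms by (simp add: prob_space.real_distribution_distr)
  show ?thesis unfolding cdf_set_def is_cdf_def rv_cdf_eq_cdf[OF assms(2)]
    using cdf_nondecreasing cdf_is_right_cont cdf_lim_at_bot cdf_lim_at_top_prob
    by (auto intro: monoI)
qed

context prob_space begin

lemma rv_cdf_mono: "x \<le> y \<Longrightarrow> X \<in> borel_measurable M \<Longrightarrow> rv_cdf M X x \<le> rv_cdf M X y"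
  unfolding rv_cdf_def by (intro finite_measure_mono) auto

lemma rv_cdf_le1: "rv_cdf M X x \<le> 1"
  unfolding rv_cdf_def by simp

lemma rv_cdf_nonneg: "rv_cdf M X x \<ge> 0"
  unfolding rv_cdf_def by simp

lemma pit:
  assumes X: "X \<in> borel_measurable M" and cont: "\<And>x. isCont (rv_cdf M X) x"
    and t: "0 \<le> t" "t < 1"
  shows "measure M {\<omega>\<in>space M. rv_cdf M X (X \<omega>) \<le> t} = t"
proof -
  define G where "G = rv_cdf M X"
  have isc: "is_cdf G" using rv_cdf_is_cdf[OF prob_space_axioms X] unfolding G_def cdf_set_def by auto
  have Gmono: "\<And>x y. x \<le> y \<Longrightarrow> G x \<le> G y" using isc unfolding is_cdf_def mono_def by auto
  have bot: "(G \<longlongrightarrow> 0) at_bot" and top: "(G \<longlongrightarrow> 1) at_top" using isc unfolding is_cdf_def by auto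
  define S where "S = {y. G y \<le> t}"
  show ?thesis
  proof (cases "S = {}")
    case True
    then have "\<And>y. t < G y" unfolding S_def by (auto simp: not_le[symmetric])
    then have "\<forall>\<^sub>F y in at_bot. t \<le> G y" by (intro always_eventually) (auto intro: less_imp_le)
    then have "t \<le> 0" by (intro tendsto_lowerbound[OF bot]) auto
    then have "t = 0" using t by auto
    have "{\<omega>\<in>space M. G (X \<omega>) \<le> t} = {}" using \<open>\<And>y. t < G y\<close> by (auto simp: not_le[symmetric])
    then show ?thesis using \<open>t = 0\<close> unfolding G_def[symmetric] by (metis measure_empty)
  next
    case False
    have "eventually (\<lambda>y. G y > t) at_top" using top t(2) by (rule order_tendstoD)
    then obtain b where b: "\<And>y. y \<ge> b \<Longrightarrow> G y > t" by (auto simp: eventually_at_top_linorder)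
    have bdd: "bdd_above S" unfolding S_def bdd_above_def
      using b by (metis linorder_not_le mem_Collect_eq order_less_imp_le)
    define s where "s = Sup S"
    have inS: "\<And>y. y \<in> S \<Longrightarrow> y \<le> s" unfolding s_def using bdd by (simp add: cSup_upper)
    have below: "\<And>y. y < s \<Longrightarrow> G y \<le> t"
    proof -
      fix y assume "y < s"
      then obtain z where "z \<in> S" "y < z" unfolding s_def using False by (meson less_cSupE)
      then show "G y \<le> t" using Gmono[of y z] unfolding S_def by auto
    qed
    have Gs_le: "G s \<le> t"
    proof (rule tendsto_upperbound)
      show "(G \<longlongrightarrow> G s) (at_left s)" using cont unfolding G_def
        by (simp add: isCont_def filterlim_at_split)
      show "\<forall>\<^sub>F y in at_left s. G y \<le> t" unfolding eventually_at_filter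
        by (intro always_eventually) (auto intro: below)
      show "at_left s \<noteq> bot" by simp
    qed
    have Gs_ge: "t \<le> G s"
    proof (rule tendsto_lowerbound)
      show "(G \<longlongrightarrow> G s) (at_right s)" using cont unfolding G_def
        by (simp add: isCont_def filterlim_at_split)
      show "\<forall>\<^sub>F y in at_right s. t \<le> G y"
      proof -
        have "\<And>y. s < y \<Longrightarrow> t \<le> G y"
        proof -
          fix y assume "s < y"
          then have "y \<notin> S" using inS by force
          then show "t \<le> G y" unfolding S_def by auto
        qed
        then show ?thesis unfolding eventually_at_filter by (intro always_eventually) auto
      qed
      show "at_right s \<noteq> bot" by simp
    qed
    have eq: "{\<omega>\<in>space M. G (X \<omega>) \<le> t} = {\<omega>\<in>space M. X \<omega> \<le> s}"
    proof -
      have "\<And>y. G y \<le> t \<longleftrightarrow> y \<le> s"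
        using inS Gmono Gs_le unfolding S_def by (meson dual_order.trans mem_Collect_eq)
      then show ?thesis by auto
    qed
    show ?thesis unfolding G_def[symmetric] eq using Gs_le Gs_ge unfolding G_def rv_cdf_def by simp
  qed
qed

end


definition pq :: "real \<Rightarrow> real \<Rightarrow> real \<Rightarrow> real" where
  "pq \<alpha> \<theta> t = \<theta> * (1 - t) powr (-1/\<alpha>)"

context
  fixes \<alpha> \<theta> :: real
  assumes a: "0 < \<alpha>" and th: "0 < \<theta>"
begin

lemma pc_alt: "pareto_cdf \<alpha> \<theta> = (\<lambda>x. 1 - (\<theta> / max x \<theta>) powr \<alpha>)"
proof
  fix x show "pareto_cdf \<alpha> \<theta> x = 1 - (\<theta> / max x \<theta>) powr \<alpha>"
    using th by (auto simp: pareto_cdf_def max_def)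
qed

lemma pc_cont: "isCont (pareto_cdf \<alpha> \<theta>) x"
proof -
  have "max x \<theta> > 0" using th by auto
  then show ?thesis unfolding pc_alt using th
    by (intro continuous_intros) auto
qed

lemma pc_nonneg: "0 \<le> pareto_cdf \<alpha> \<theta> x"
proof -
  have "\<theta> / max x \<theta> \<le> 1" "\<theta> / max x \<theta> \<ge> 0" using th by (auto simp: field_simps)
  then have "(\<theta> / max x \<theta>) powr \<alpha> \<le> 1" using a by (simp add: powr_le1)
  then show ?thesis unfolding pc_alt by simp
qed

lemma pc_less1: "pareto_cdf \<alpha> \<theta> x < 1"
proof -
  have "\<theta> / max x \<theta> > 0" using th by auto
  then show ?thesis unfolding pc_alt using th by auto
qed

lemma pc_zero: "x \<le> \<theta> \<Longrightarrow> pareto_cdf \<alpha> \<theta> x = 0"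
  unfolding pc_alt using th by (simp add: max_def)

lemma pc_strict: "\<theta> \<le> x \<Longrightarrow> x < y \<Longrightarrow> pareto_cdf \<alpha> \<theta> x < pareto_cdf \<alpha> \<theta> y"
proof -
  assume xy: "\<theta> \<le> x" "x < y"
  have "\<theta> / y < \<theta> / x" using xy th by (simp add: divide_strict_left_mono)
  then have "(\<theta> / y) powr \<alpha> < (\<theta> / x) powr \<alpha>" using a th xy by (intro powr_less_mono2) auto
  then show ?thesis using xy unfolding pareto_cdf_def by auto
qed

lemma pc_mono: "x \<le> y \<Longrightarrow> pareto_cdf \<alpha> \<theta> x \<le> pareto_cdf \<alpha> \<theta> y"
proof -
  assume xy: "x \<le> y"
  show ?thesis
  proof (cases "x \<le> \<theta>")
    case True then show ?thesis using pc_zero pc_nonneg by simp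
  next
    case False then show ?thesis using pc_strict[of x y] xy by (cases "x = y") auto
  qed
qed

lemma pc_le_iff: "\<theta> \<le> x \<Longrightarrow> pareto_cdf \<alpha> \<theta> y \<le> pareto_cdf \<alpha> \<theta> x \<longleftrightarrow> y \<le> x"
  using pc_strict pc_mono by (meson not_le)

lemma pq_ge: "0 \<le> t \<Longrightarrow> t < 1 \<Longrightarrow> \<theta> \<le> pq \<alpha> \<theta> t"
proof -
  assume t: "0 \<le> t" "t < 1"
  have "1 \<le> (1 - t) powr (-1/\<alpha>)"
  proof -
    have "(1 - t) powr (-1/\<alpha>) = 1 / (1 - t) powr (1/\<alpha>)" using t by (simp add: powr_minus_divide)
    moreover have "(1 - t) powr (1/\<alpha>) \<le> 1" using t a by (intro powr_le1) auto
    moreover have "(1 - t) powr (1/\<alpha>) > 0" using t by simp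
    ultimately show ?thesis by simp
  qed
  then show ?thesis unfolding pq_def using th by simp
qed

lemma pq_le_iff: "0 \<le> t \<Longrightarrow> t < 1 \<Longrightarrow> \<theta> \<le> x \<Longrightarrow> pq \<alpha> \<theta> t \<le> x \<longleftrightarrow> t \<le> pareto_cdf \<alpha> \<theta> x"
proof -
  assume t: "0 \<le> t" "t < 1" and x: "\<theta> \<le> x"
  have xpos: "x > 0" using x th by auto
  have "pq \<alpha> \<theta> t \<le> x \<longleftrightarrow> (1 - t) powr (-1/\<alpha>) \<le> x / \<theta>"
    unfolding pq_def using th by (simp add: field_simps mult.commute)
  also have "\<dots> \<longleftrightarrow> ((1 - t) powr (-1/\<alpha>)) powr (-\<alpha>) \<ge> (x / \<theta>) powr (-\<alpha>)"
  proof -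
    have p1: "(1 - t) powr (-1/\<alpha>) > 0" using t by simp
    have p2: "x / \<theta> > 0" using xpos th by simp
    show ?thesis
    proof
      assume "(1 - t) powr (-1/\<alpha>) \<le> x / \<theta>"
      then show "((1 - t) powr (-1/\<alpha>)) powr (-\<alpha>) \<ge> (x / \<theta>) powr (-\<alpha>)"
        using p1 p2 a by (intro powr_mono2') auto
    next
      assume h: "((1 - t) powr (-1/\<alpha>)) powr (-\<alpha>) \<ge> (x / \<theta>) powr (-\<alpha>)"
      show "(1 - t) powr (-1/\<alpha>) \<le> x / \<theta>"
      proof (rule ccontr)
        assume "\<not> ?thesis"
        then have "x / \<theta> < (1 - t) powr (-1/\<alpha>)" by simp
        then have "((1 - t) powr (-1/\<alpha>)) powr (-\<alpha>) < (x / \<theta>) powr (-\<alpha>)"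
          using p1 p2 a by (intro powr_less_mono2_neg) auto
        then show False using h by simp
      qed
    qed
  qed
  also have "((1 - t) powr (-1/\<alpha>)) powr (-\<alpha>) = 1 - t"
    using a t by (simp add: powr_powr)
  also have "(x / \<theta>) powr (-\<alpha>) = (\<theta> / x) powr \<alpha>"
    using xpos th by (simp add: powr_minus_divide powr_divide)
  finally show ?thesis unfolding pareto_cdf_def using x by auto
qed

end


lemma concave_powr_sum:
  fixes w a :: "nat \<Rightarrow> real"
  assumes a: "0 < \<alpha>" "\<alpha> \<le> 1" and S: "finite S" "S \<noteq> {}"
    and w: "\<And>i. i \<in> S \<Longrightarrow> 0 \<le> w i" "(\<Sum>i\<in>S. w i) = 1" and pos: "\<And>i. i \<in> S \<Longrightarrow> 0 < a i"
  shows "(\<Sum>i\<in>S. w i * a i powr \<alpha>) \<le> (\<Sum>i\<in>S. w i * a i) powr \<alpha>"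
proof -
  have cv: "convex_on {0<..} (\<lambda>x::real. x powr (1/\<alpha>))" using a by (intro powr_convex) auto
  have "(\<Sum>i\<in>S. w i *\<^sub>R (a i powr \<alpha>)) powr (1/\<alpha>) \<le> (\<Sum>i\<in>S. w i * ((a i powr \<alpha>) powr (1/\<alpha>)))"
    using convex_on_sum[OF S cv w(2) w(1), of "\<lambda>i. a i powr \<alpha>"] pos by (simp add: less_imp_neq[symmetric])
  also have "\<dots> = (\<Sum>i\<in>S. w i * a i)"
    using pos a by (intro sum.cong) (auto simp: powr_powr less_imp_le)
  finally have h: "(\<Sum>i\<in>S. w i * a i powr \<alpha>) powr (1/\<alpha>) \<le> (\<Sum>i\<in>S. w i * a i)" by simp
  define s where "s = (\<Sum>i\<in>S. w i * a i powr \<alpha>)"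
  have s0: "0 \<le> s" unfolding s_def using w pos by (intro sum_nonneg) auto
  have "s = (s powr (1/\<alpha>)) powr \<alpha>"
    using s0 a by (cases "s = 0") (auto simp: powr_powr)
  also have "\<dots> \<le> (\<Sum>i\<in>S. w i * a i) powr \<alpha>"
    using h a s0 unfolding s_def by (intro powr_mono2) auto
  finally show ?thesis unfolding s_def .
qed

lemma pc_pq: "0 < \<alpha> \<Longrightarrow> 0 < \<theta> \<Longrightarrow> 0 \<le> t \<Longrightarrow> t < 1 \<Longrightarrow> pareto_cdf \<alpha> \<theta> (pq \<alpha> \<theta> t) = t"
proof -
  assume h: "0 < \<alpha>" "0 < \<theta>" "0 \<le> t" "t < 1"
  have ge: "\<theta> \<le> pq \<alpha> \<theta> t" using pq_ge h by auto
  have "\<theta> / pq \<alpha> \<theta> t = (1 - t) powr (1/\<alpha>)"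
    using h unfolding pq_def by (simp add: powr_minus_divide)
  then have "(\<theta> / pq \<alpha> \<theta> t) powr \<alpha> = 1 - t" using h by (simp add: powr_powr)
  then show ?thesis unfolding pareto_cdf_def using ge by simp
qed

lemma le_pq_iff: "0 < \<alpha> \<Longrightarrow> 0 < \<theta> \<Longrightarrow> 0 \<le> t \<Longrightarrow> t < 1 \<Longrightarrow> \<theta> \<le> x \<Longrightarrow>
   x \<le> pq \<alpha> \<theta> t \<longleftrightarrow> pareto_cdf \<alpha> \<theta> x \<le> t"
  using pc_pq[of \<alpha> \<theta> t] pc_le_iff[of \<alpha> \<theta> "pq \<alpha> \<theta> t" x] pq_ge[of \<alpha> \<theta> t] by auto

lemma pq_measurable[measurable]: "(\<lambda>t. pq \<alpha> \<theta> t) \<in> borel_measurable borel"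
  unfolding pq_def by measurable


lemma worst_rho_upper:
  assumes "H \<in> agg_set M n F"
  shows "ereal (\<rho> H) \<le> worst_rho M \<rho> n F"
  unfolding worst_rho_def using assms by (rule SUP_upper)

lemma I2:
  assumes M: "prob_space M" and rho: "monotone_risk \<rho>" and a: "0 < \<alpha>" "\<alpha> \<le> 1"
    and th: "\<forall>i<n. 0 < \<theta> i" and ds: "doubly_stochastic n \<Lambda>"
  shows "worst_rho M \<rho> n (mat_cdfs n \<Lambda> (pareto_tuple \<alpha> \<theta>)) \<le> worst_rho M \<rho> n (pareto_tuple \<alpha> (mat_vec n \<Lambda> \<theta>))"
  unfolding worst_rho_def[of M \<rho> n "mat_cdfs n \<Lambda> (pareto_tuple \<alpha> \<theta>)"]
proof (rule SUP_least)
  interpret prob_space M by (rule M)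
  fix H assume "H \<in> agg_set M n (mat_cdfs n \<Lambda> (pareto_tuple \<alpha> \<theta>))"
  then obtain Y where H: "H = rv_cdf M (\<lambda>\<omega>. \<Sum>i<n. Y i \<omega>)"
    and Y: "\<And>i. i < n \<Longrightarrow> Y i \<in> borel_measurable M"
    "\<And>i. i < n \<Longrightarrow> rv_cdf M (Y i) = mat_cdfs n \<Lambda> (pareto_tuple \<alpha> \<theta>) i"
    unfolding agg_set_def by auto
  define G where "G = mat_cdfs n \<Lambda> (pareto_tuple \<alpha> \<theta>)"
  define t where "t = mat_vec n \<Lambda> \<theta>"
  have Lnn: "\<And>i j. i < n \<Longrightarrow> j < n \<Longrightarrow> 0 \<le> \<Lambda> i j" and Lrow: "\<And>i. i < n \<Longrightarrow> (\<Sum>j<n. \<Lambda> i j) = 1"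
    using ds unfolding doubly_stochastic_def by auto
  have Gdef: "\<And>i x. G i x = (\<Sum>j<n. \<Lambda> i j * pareto_cdf \<alpha> (\<theta> j) x)"
    unfolding G_def mat_cdfs_def pareto_tuple_def by simp
  have tpos: "\<And>i. i < n \<Longrightarrow> 0 < t i"
  proof -
    fix i assume i: "i < n"
    have "(\<Sum>j<n. \<Lambda> i j) \<noteq> 0" using Lrow[OF i] by simp
    then obtain j where j: "j < n" "\<Lambda> i j \<noteq> 0" by (meson lessThan_iff sum.neutral)
    have "0 < \<Lambda> i j * \<theta> j" using j Lnn[OF i j(1)] th by auto
    also have "\<dots> \<le> (\<Sum>j<n. \<Lambda> i j * \<theta> j)"
      using j Lnn[OF i] th by (intro member_le_sum) (auto intro: less_imp_le)
    finally show "0 < t i" unfolding t_def mat_vec_def .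
  qed
  have Gcont: "\<And>i x. isCont (G i) x"
  proof -
    fix i x
    have "isCont (\<lambda>x. \<Sum>j<n. \<Lambda> i j * pareto_cdf \<alpha> (\<theta> j) x) x"
    proof (intro continuous_intros)
      fix j assume "j \<in> {..<n}"
      then show "isCont (pareto_cdf \<alpha> (\<theta> j)) x" using pc_cont a th by auto
    qed
    then show "isCont (G i) x" unfolding Gdef[abs_def] .
  qed
  have Gnn: "\<And>i x. i < n \<Longrightarrow> 0 \<le> G i x"
    unfolding Gdef using Lnn pc_nonneg a th by (auto intro!: sum_nonneg)
  have oneminus: "\<And>i x. i < n \<Longrightarrow> 1 - G i x = (\<Sum>j<n. \<Lambda> i j * (1 - pareto_cdf \<alpha> (\<theta> j) x))"
    using Lrow unfolding Gdef by (simp add: algebra_simps sum_subtractf)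
  have Gless: "\<And>i x. i < n \<Longrightarrow> G i x < 1"
  proof -
    fix i x assume i: "i < n"
    have "(\<Sum>j<n. \<Lambda> i j) \<noteq> 0" using Lrow[OF i] by simp
    then obtain j where j: "j < n" "\<Lambda> i j \<noteq> 0" by (meson lessThan_iff sum.neutral)
    have "0 < \<Lambda> i j * (1 - pareto_cdf \<alpha> (\<theta> j) x)"
      using j Lnn[OF i j(1)] pc_less1 a th by auto
    also have "\<dots> \<le> (\<Sum>j<n. \<Lambda> i j * (1 - pareto_cdf \<alpha> (\<theta> j) x))"
    proof (rule member_le_sum)
      fix k assume k: "k \<in> {..<n} - {j}"
      have "pareto_cdf \<alpha> (\<theta> k) x < 1" using pc_less1 a th k by auto
      then show "0 \<le> \<Lambda> i k * (1 - pareto_cdf \<alpha> (\<theta> k) x)" using Lnn[OF i] k by auto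
    qed (use j in auto)
    finally show "G i x < 1" using oneminus[OF i, of x] by simp
  qed
  have dom: "\<And>i y. i < n \<Longrightarrow> t i \<le> y \<Longrightarrow> pareto_cdf \<alpha> (t i) y \<le> G i y"
  proof -
    fix i y assume i: "i < n" and y: "t i \<le> y"
    have ypos: "0 < y" using y tpos[OF i] by auto
    have "1 - G i y = (\<Sum>j<n. \<Lambda> i j * (1 - pareto_cdf \<alpha> (\<theta> j) y))" by (rule oneminus[OF i])
    also have "\<dots> \<le> (\<Sum>j<n. \<Lambda> i j * (\<theta> j / y) powr \<alpha>)"
    proof (rule sum_mono)
      fix j assume j: "j \<in> {..<n}"
      have "1 - pareto_cdf \<alpha> (\<theta> j) y = (\<theta> j / max y (\<theta> j)) powr \<alpha>"
        using pc_alt[of \<alpha> "\<theta> j"] a th j by simp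
      also have "\<dots> \<le> (\<theta> j / y) powr \<alpha>"
        using a th j ypos by (intro powr_mono2) (auto intro!: divide_left_mono)
      finally show "\<Lambda> i j * (1 - pareto_cdf \<alpha> (\<theta> j) y) \<le> \<Lambda> i j * (\<theta> j / y) powr \<alpha>"
        using Lnn i j by (intro mult_left_mono) auto
    qed
    also have "\<dots> \<le> (\<Sum>j<n. \<Lambda> i j * (\<theta> j / y)) powr \<alpha>"
      using a Lnn[OF i] Lrow[OF i] th ypos i by (intro concave_powr_sum) auto
    also have "(\<Sum>j<n. \<Lambda> i j * (\<theta> j / y)) = t i / y"
      unfolding t_def mat_vec_def by (simp add: sum_divide_distrib)
    finally have "1 - G i y \<le> (t i / y) powr \<alpha>" .
    then show "pareto_cdf \<alpha> (t i) y \<le> G i y" unfolding pareto_cdf_def using y by auto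
  qed
  define W where "W = (\<lambda>i \<omega>. pq \<alpha> (t i) (G i (Y i \<omega>)))"
  have Gmeas: "\<And>i. G i \<in> borel_measurable borel"
    using Gcont by (intro borel_measurable_continuous_onI) (simp add: continuous_at_imp_continuous_on)
  have Wmeas: "\<And>i. i < n \<Longrightarrow> W i \<in> borel_measurable M"
    unfolding W_def using Y(1) Gmeas by measurable
  have Wcdf: "\<And>i. i < n \<Longrightarrow> rv_cdf M (W i) = pareto_tuple \<alpha> t i"
  proof
    fix i x assume i: "i < n"
    show "rv_cdf M (W i) x = pareto_tuple \<alpha> t i x"
    proof (cases "t i \<le> x")
      case True
      have "{\<omega>\<in>space M. W i \<omega> \<le> x} = {\<omega>\<in>space M. rv_cdf M (Y i) (Y i \<omega>) \<le> pareto_cdf \<alpha> (t i) x}"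
        unfolding W_def using pq_le_iff[of \<alpha> "t i" _ x] a tpos[OF i] Gnn[OF i] Gless[OF i] True Y(2)[OF i]
        unfolding G_def by auto
      moreover have "measure M {\<omega>\<in>space M. rv_cdf M (Y i) (Y i \<omega>) \<le> pareto_cdf \<alpha> (t i) x} = pareto_cdf \<alpha> (t i) x"
        using pit[OF Y(1)[OF i]] Y(2)[OF i] Gcont pc_nonneg pc_less1 a tpos[OF i] unfolding G_def by auto
      ultimately show ?thesis unfolding rv_cdf_def pareto_tuple_def by simp
    next
      case False
      have "x < W i \<omega>" for \<omega>
      proof -
        have "t i \<le> W i \<omega>" unfolding W_def
          using pq_ge[of \<alpha> "t i" "G i (Y i \<omega>)"] a tpos[OF i] Gnn[OF i] Gless[OF i] by auto
        then show ?thesis using False by simp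
      qed
      then have e: "{\<omega>\<in>space M. W i \<omega> \<le> x} = {}" by (auto simp: not_le[symmetric])
      have "pareto_cdf \<alpha> (t i) x = 0" using pc_zero[of \<alpha> "t i" x] a tpos[OF i] False by simp
      then show ?thesis unfolding rv_cdf_def pareto_tuple_def e by simp
    qed
  qed
  have YW: "\<And>i \<omega>. i < n \<Longrightarrow> Y i \<omega> \<le> W i \<omega>"
  proof -
    fix i \<omega> assume i: "i < n"
    show "Y i \<omega> \<le> W i \<omega>"
    proof (cases "t i \<le> Y i \<omega>")
      case True
      then show ?thesis unfolding W_def using le_pq_iff[of \<alpha> "t i" "G i (Y i \<omega>)" "Y i \<omega>"]
        a tpos[OF i] Gnn[OF i] Gless[OF i] dom[OF i True] by auto
    next
      case False
      then show ?thesis unfolding W_def using pq_ge[of \<alpha> "t i" "G i (Y i \<omega>)"] a tpos[OF i] Gnn[OF i] Gless[OF i] by auto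
    qed
  qed
  define H' where "H' = rv_cdf M (\<lambda>\<omega>. \<Sum>i<n. W i \<omega>)"
  have H'agg: "H' \<in> agg_set M n (pareto_tuple \<alpha> (mat_vec n \<Lambda> \<theta>))"
    unfolding agg_set_def H'_def using Wmeas Wcdf unfolding t_def by blast
  have "\<rho> H \<le> \<rho> H'"
  proof -
    have "H \<in> cdf_set" unfolding H using rv_cdf_is_cdf[OF M] Y(1) by auto
    moreover have "H' \<in> cdf_set" unfolding H'_def using rv_cdf_is_cdf[OF M] Wmeas by auto
    moreover have "\<forall>x. H' x \<le> H x"
    proof
      fix x
      have "{\<omega>\<in>space M. (\<Sum>i<n. W i \<omega>) \<le> x} \<subseteq> {\<omega>\<in>space M. (\<Sum>i<n. Y i \<omega>) \<le> x}"
      proof (safe)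
        fix \<omega> assume "\<omega> \<in> space M" "(\<Sum>i<n. W i \<omega>) \<le> x"
        moreover have "(\<Sum>i<n. Y i \<omega>) \<le> (\<Sum>i<n. W i \<omega>)" using YW by (intro sum_mono) auto
        ultimately show "(\<Sum>i<n. Y i \<omega>) \<le> x" by simp
      qed
      then show "H' x \<le> H x" unfolding H'_def H rv_cdf_def
        using Y(1) by (intro finite_measure_mono) auto
    qed
    ultimately show ?thesis using rho unfolding monotone_risk_def by blast
  qed
  then have "ereal (\<rho> H) \<le> ereal (\<rho> H')" by simp
  also have "\<dots> \<le> worst_rho M \<rho> n (pareto_tuple \<alpha> (mat_vec n \<Lambda> \<theta>))"
    by (rule worst_rho_upper[OF H'agg])
  finally show "ereal (\<rho> H) \<le> worst_rho M \<rho> n (pareto_tuple \<alpha> (mat_vec n \<Lambda> \<theta>))" .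
qed


definition dig :: "nat \<Rightarrow> real \<Rightarrow> int" where
  "dig k x = \<lfloor>2^(Suc k) * x\<rfloor> - 2 * \<lfloor>2^k * x\<rfloor>"

definition tri :: "nat \<Rightarrow> real \<Rightarrow> int" where
  "tri k x = \<lfloor>3^(Suc k) * x\<rfloor> - 3 * \<lfloor>3^k * x\<rfloor>"

lemma dig_01: "dig k x = 0 \<or> dig k x = 1"
proof -
  define y where "y = 2^k * x"
  have "2^(Suc k) * x = 2 * y" unfolding y_def by simp
  moreover have "\<lfloor>2 * y\<rfloor> = 2 * \<lfloor>y\<rfloor> \<or> \<lfloor>2 * y\<rfloor> = 2 * \<lfloor>y\<rfloor> + 1"
  proof -
    have "of_int \<lfloor>y\<rfloor> \<le> y" "y < of_int \<lfloor>y\<rfloor> + 1" by linarith+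
    then have "2 * of_int \<lfloor>y\<rfloor> \<le> 2 * y" "2 * y < 2 * of_int \<lfloor>y\<rfloor> + 2" by linarith+
    then have "2 * \<lfloor>y\<rfloor> \<le> \<lfloor>2 * y\<rfloor>" "\<lfloor>2 * y\<rfloor> < 2 * \<lfloor>y\<rfloor> + 2"
      by (simp_all add: le_floor_iff floor_less_iff)
    then show ?thesis by linarith
  qed
  have e1: "\<lfloor>2^(Suc k) * x\<rfloor> = \<lfloor>2 * y\<rfloor>" by (simp add: y_def mult.assoc)
  have "dig k x = \<lfloor>2 * y\<rfloor> - 2 * \<lfloor>y\<rfloor>" unfolding dig_def e1 y_def ..
  then show ?thesis using \<open>\<lfloor>2 * y\<rfloor> = 2 * \<lfloor>y\<rfloor> \<or> \<lfloor>2 * y\<rfloor> = 2 * \<lfloor>y\<rfloor> + 1\<close> by linarith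
qed


lemma dig_sums:
  assumes "0 \<le> x" "x < 1"
  shows "(\<lambda>k. real_of_int (dig k x) / 2^(Suc k)) sums x"
proof -
  define f where "f = (\<lambda>k::nat. real_of_int \<lfloor>2^k * x\<rfloor> / 2^k)"
  have tm: "real_of_int (dig k x) / 2^(Suc k) = f (Suc k) - f k" for k
  proof -
    have "real_of_int (dig k x) / 2^(Suc k) = real_of_int \<lfloor>2^(Suc k) * x\<rfloor> / 2^(Suc k) - 2 * real_of_int \<lfloor>2^k * x\<rfloor> / 2^(Suc k)"
      unfolding dig_def by (simp add: diff_divide_distrib)
    also have "2 * real_of_int \<lfloor>2^k * x\<rfloor> / 2^(Suc k) = real_of_int \<lfloor>2^k * x\<rfloor> / 2^k" by simp
    finally show ?thesis unfolding f_def .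
  qed
  have ps: "(\<Sum>k<m. real_of_int (dig k x) / 2^(Suc k)) = f m" for m
  proof -
    have "(\<Sum>k<m. real_of_int (dig k x) / 2^(Suc k)) = (\<Sum>k<m. f (Suc k) - f k)" using tm by simp
    also have "\<dots> = f m - f 0" by (rule sum_lessThan_telescope)
    also have "f 0 = 0" unfolding f_def using assms by (simp add: floor_eq_iff)
    finally show ?thesis by simp
  qed
  have b: "\<bar>f m - x\<bar> \<le> 1 / 2^m" for m
  proof -
    have p: "(0::real) < 2^m" by simp
    have "real_of_int \<lfloor>2^m * x\<rfloor> \<le> 2^m * x" by (rule of_int_floor_le)
    then have l: "f m \<le> x" unfolding f_def using p by (simp add: divide_le_eq mult.commute)
    have "2^m * x < real_of_int \<lfloor>2^m * x\<rfloor> + 1" by (rule real_of_int_floor_add_one_gt)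
    then have "x < (real_of_int \<lfloor>2^m * x\<rfloor> + 1) / 2^m" using p by (simp add: less_divide_eq mult.commute)
    also have "\<dots> = f m + 1 / 2^m" unfolding f_def by (simp add: add_divide_distrib)
    finally show ?thesis using l by simp
  qed
  have lim0: "(\<lambda>m. 1 / (2::real)^m) \<longlonglongrightarrow> 0"
    by (intro LIMSEQ_divide_realpow_zero) auto
  have "(\<lambda>m. f m - x) \<longlonglongrightarrow> 0"
  proof (rule Lim_null_comparison[OF _ lim0])
    show "\<forall>\<^sub>F m in sequentially. norm (f m - x) \<le> 1 / 2^m" using b by simp
  qed
  then have "f \<longlonglongrightarrow> x" by (simp add: LIM_zero_cancel)
  then show ?thesis unfolding sums_def ps .
qed


primrec Nacc :: "(nat \<Rightarrow> int) \<Rightarrow> nat \<Rightarrow> int" where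
  "Nacc c 0 = 0"
| "Nacc c (Suc m) = 3 * Nacc c m + c m"

lemma tern_summable:
  assumes c: "\<And>k. c k = 0 \<or> c k = 1"
  shows "summable (\<lambda>k. real_of_int (c k) / 3^(Suc k))"
proof (rule summable_comparison_test')
  have "summable (\<lambda>k. (1/3) * (1/3::real)^k)" by (intro summable_mult summable_geometric) simp
  then show "summable (\<lambda>k. 1 / (3::real)^(Suc k))" by (simp add: power_one_over)
  show "norm (real_of_int (c k) / 3^(Suc k)) \<le> 1 / 3^(Suc k)" for k
    using c[of k] by auto
qed

lemma tri_tern:
  assumes c: "\<And>k. c k = 0 \<or> c k = 1"
  shows "tri m (\<Sum>k. real_of_int (c k) / 3^(Suc k)) = c m"
proof -
  define s where "s = (\<Sum>k. real_of_int (c k) / 3^(Suc k))"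
  have sm: "summable (\<lambda>k. real_of_int (c k) / 3^(Suc k))" by (rule tern_summable[OF c])
  have fl: "\<lfloor>3^m * s\<rfloor> = Nacc c m" for m
  proof -
    have split: "s = (\<Sum>k. real_of_int (c (k + m)) / 3^(Suc (k + m))) + (\<Sum>k<m. real_of_int (c k) / 3^(Suc k))"
      unfolding s_def using suminf_split_initial_segment[OF sm, of m] by simp
    have init: "3^m * (\<Sum>k<m. real_of_int (c k) / 3^(Suc k)) = of_int (Nacc c m)"
    proof (induction m)
      case 0 then show ?case by simp
    next
      case (Suc m)
      have "3^(Suc m) * (\<Sum>k<Suc m. real_of_int (c k) / 3^(Suc k))
          = 3 * (3^m * (\<Sum>k<m. real_of_int (c k) / 3^(Suc k))) + real_of_int (c m)"
        by (simp add: field_simps)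
      then show ?case using Suc by simp
    qed
    have smt: "summable (\<lambda>k. real_of_int (c (k + m)) / 3^(Suc (k + m)))"
      using sm by (rule summable_ignore_initial_segment)
    define r where "r = 3^m * (\<Sum>k. real_of_int (c (k + m)) / 3^(Suc (k + m)))"
    have r_eq: "r = (\<Sum>k. real_of_int (c (k + m)) / 3^(Suc k))"
    proof -
      have "r = (\<Sum>k. 3^m * (real_of_int (c (k + m)) / 3^(Suc (k + m))))"
        unfolding r_def by (rule suminf_mult[OF smt, symmetric])
      also have "\<dots> = (\<Sum>k. real_of_int (c (k + m)) / 3^(Suc k))"
      proof -
        have "3^m * (real_of_int (c (k + m)) / 3^(Suc (k + m))) = real_of_int (c (k + m)) / 3^(Suc k)" for k
        proof -
          have "(3::real)^(Suc (k + m)) = 3^(Suc k) * 3^m" by (simp add: power_add)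
          then show ?thesis by simp
        qed
        then show ?thesis by simp
      qed
      finally show ?thesis .
    qed
    have smr: "summable (\<lambda>k. real_of_int (c (k + m)) / 3^(Suc k))"
      using tern_summable[of "\<lambda>k. c (k + m)"] c by simp
    have cnn: "0 \<le> real_of_int (c (k + m)) / 3^(Suc k)" for k using c[of "k+m"] by auto
    have r0: "0 \<le> r" unfolding r_eq using smr cnn by (rule suminf_nonneg)
    have geo: "(\<lambda>k. 1 / (3::real)^(Suc k)) sums (1/2)"
    proof -
      have "(\<lambda>k. (1/3::real)^k) sums (1 / (1 - 1/3))" by (rule geometric_sums) simp
      then have "(\<lambda>k. (1/3) * (1/3::real)^k) sums ((1/3) * (1 / (1 - 1/3)))" by (rule sums_mult)
      then show ?thesis by (simp add: power_one_over)
    qed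
    have r1: "r \<le> 1/2" unfolding r_eq
    proof -
      have "(\<Sum>k. real_of_int (c (k + m)) / 3^(Suc k)) \<le> (\<Sum>k. 1 / (3::real)^(Suc k))"
      proof -
        have le: "real_of_int (c (k + m)) / 3^(Suc k) \<le> 1 / (3::real)^(Suc k)" for k
          using c[of "k+m"] by (cases "c (k+m) = 0") auto
        show ?thesis using smr geo le by (intro suminf_le) (auto simp: sums_iff)
      qed
      then show "(\<Sum>k. real_of_int (c (k + m)) / 3^(Suc k)) \<le> 1/2" using geo by (simp add: sums_iff)
    qed
    have "3^m * s = r + 3^m * (\<Sum>k<m. real_of_int (c k) / 3^(Suc k))"
      unfolding r_def by (subst split) (simp only: distrib_left)
    then have "3^m * s = of_int (Nacc c m) + r" using init by simp
    then show ?thesis using r0 r1 by (simp add: floor_eq_iff)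
  qed
  show ?thesis unfolding tri_def s_def[symmetric] fl by simp
qed

definition enc :: "nat \<Rightarrow> (nat \<Rightarrow> real) \<Rightarrow> real" where
  "enc n u = (\<Sum>m. real_of_int (dig (m div n) (u (m mod n))) / 3^(Suc m))"

definition dec :: "nat \<Rightarrow> nat \<Rightarrow> real \<Rightarrow> real" where
  "dec n j w = (\<Sum>k. real_of_int (tri (k * n + j) w) / 2^(Suc k))"

lemma dec_enc:
  assumes "j < n" "0 \<le> u j" "u j < 1"
  shows "dec n j (enc n u) = u j"
proof -
  have "tri (k * n + j) (enc n u) = dig k (u j)" for k
  proof -
    have "tri (k * n + j) (enc n u) = dig ((k * n + j) div n) (u ((k * n + j) mod n))"
      unfolding enc_def by (rule tri_tern) (rule dig_01)
    also have "(k * n + j) div n = k" using assms(1) by simp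
    also have "(k * n + j) mod n = j" using assms(1) by simp
    finally show ?thesis .
  qed
  then have "dec n j (enc n u) = (\<Sum>k. real_of_int (dig k (u j)) / 2^(Suc k))"
    unfolding dec_def by simp
  also have "\<dots> = u j" using dig_sums[OF assms(2,3)] by (simp add: sums_iff)
  finally show ?thesis .
qed

lemma dec_measurable[measurable]: "dec n j \<in> borel_measurable borel"
  unfolding dec_def tri_def by measurable

lemma enc_measurable[measurable]:
  assumes [measurable]: "\<And>j. U j \<in> borel_measurable M"
  shows "(\<lambda>\<omega>. enc n (\<lambda>j. U j \<omega>)) \<in> borel_measurable M"
  unfolding enc_def dig_def by measurable


definition qf :: "(real \<Rightarrow> real) \<Rightarrow> real \<Rightarrow> real" where
  "qf F v = (if 0 < v \<and> v < 1 then Inf {w. v \<le> F w} else 0)"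

lemma qf_galois:
  assumes F: "is_cdf F" and v: "0 < v" "v < 1"
  shows "qf F v \<le> w \<longleftrightarrow> v \<le> F w"
proof -
  have Fmono: "\<And>x y. x \<le> y \<Longrightarrow> F x \<le> F y" using F unfolding is_cdf_def mono_def by auto
  have bot: "(F \<longlongrightarrow> 0) at_bot" and top: "(F \<longlongrightarrow> 1) at_top"
    and rc: "\<And>x. continuous (at_right x) F" using F unfolding is_cdf_def by auto
  define S where "S = {w. v \<le> F w}"
  have "eventually (\<lambda>y. F y > v) at_top" using top v(2) by (rule order_tendstoD)
  then obtain b where b: "\<And>y. y \<ge> b \<Longrightarrow> F y > v" by (auto simp: eventually_at_top_linorder)
  have ne: "S \<noteq> {}" unfolding S_def using b[of b] by (auto intro: less_imp_le)
  have "eventually (\<lambda>y. F y < v) at_bot" using bot v(1) by (rule order_tendstoD)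
  then obtain a where a: "\<And>y. y \<le> a \<Longrightarrow> F y < v" by (auto simp: eventually_at_bot_linorder)
  have bdd: "bdd_below S" unfolding S_def bdd_below_def
    using a by (metis linorder_not_le mem_Collect_eq order_less_imp_le)
  have q: "qf F v = Inf S" unfolding qf_def S_def using v by simp
  have qS: "v \<le> F (Inf S)"
  proof (rule tendsto_lowerbound)
    show "(F \<longlongrightarrow> F (Inf S)) (at_right (Inf S))" using rc[of "Inf S"] by (simp add: continuous_within)
    show "\<forall>\<^sub>F y in at_right (Inf S). v \<le> F y"
    proof -
      have "v \<le> F y" if "Inf S < y" for y
      proof -
        obtain s where "s \<in> S" "s < y" using \<open>Inf S < y\<close> ne by (meson cInf_lessD)
        then show ?thesis using Fmono[of s y] unfolding S_def by auto
      qed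
      then show ?thesis unfolding eventually_at_filter by (intro always_eventually) auto
    qed
    show "at_right (Inf S) \<noteq> bot" by simp
  qed
  show ?thesis
  proof
    assume "qf F v \<le> w"
    then show "v \<le> F w" using qS Fmono[of "Inf S" w] unfolding q by auto
  next
    assume "v \<le> F w"
    then have "w \<in> S" unfolding S_def by simp
    then show "qf F v \<le> w" unfolding q using bdd by (rule cInf_lower)
  qed
qed

lemma qf_measurable:
  assumes F: "is_cdf F"
  shows "qf F \<in> borel_measurable borel"
proof (subst borel_measurable_iff_le, intro allI)
  fix a
  have e: "qf F w \<le> a \<longleftrightarrow> w \<in> ({0<..<1} \<inter> {..F a}) \<union> (if 0 \<le> a then - {0<..<1} else {})" for w
  proof (cases "0 < w \<and> w < 1")
    case True then show ?thesis using qf_galois[OF F, of w a] by auto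
  next
    case False then have "qf F w = 0" unfolding qf_def by auto
    then show ?thesis using False by auto
  qed
  have "{w \<in> space borel. qf F w \<le> a} =
      ({0<..<1} \<inter> {..F a}) \<union> (if 0 \<le> a then - {0<..<1} else {})"
    using e by auto
  then show "{w \<in> space borel. qf F w \<le> a} \<in> sets borel" by simp
qed

context prob_space begin

lemma unif_all:
  fixes V :: "'a \<Rightarrow> real"
  assumes V: "\<forall>\<omega>\<in>space M. 0 \<le> V \<omega> \<and> V \<omega> \<le> 1" and u: "\<forall>t. 0 \<le> t \<and> t < 1 \<longrightarrow> prob {\<omega>\<in>space M. V \<omega> \<le> t} = t"
    and t: "0 \<le> t" "t \<le> 1"
  shows "prob {\<omega>\<in>space M. V \<omega> \<le> t} = t"
proof (cases "t = 1")
  case True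
  then have "{\<omega>\<in>space M. V \<omega> \<le> t} = space M" using V by auto
  then show ?thesis using True by (simp add: prob_space)
next
  case False then show ?thesis using u t by auto
qed

lemma unif_point:
  fixes V :: "'a \<Rightarrow> real"
  assumes Vm: "V \<in> borel_measurable M" and V: "\<forall>\<omega>\<in>space M. 0 \<le> V \<omega> \<and> V \<omega> \<le> 1"
    and u: "\<forall>t. 0 \<le> t \<and> t < 1 \<longrightarrow> prob {\<omega>\<in>space M. V \<omega> \<le> t} = t"
    and a: "0 < a" "a \<le> 1"
  shows "prob {\<omega>\<in>space M. V \<omega> = a} = 0"
proof -
  have m1: "{\<omega>\<in>space M. V \<omega> \<le> x} \<in> sets M" for x using Vm by measurable
  have m2: "{\<omega>\<in>space M. V \<omega> = a} \<in> sets M" using Vm by measurable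
  have "prob {\<omega>\<in>space M. V \<omega> = a} \<le> e" if e: "0 < e" for e
  proof (cases "e \<le> a")
    case True
    have sub: "{\<omega>\<in>space M. V \<omega> = a} \<subseteq> {\<omega>\<in>space M. V \<omega> \<le> a} - {\<omega>\<in>space M. V \<omega> \<le> a - e}"
      using e by auto
    have "prob {\<omega>\<in>space M. V \<omega> = a} \<le> prob ({\<omega>\<in>space M. V \<omega> \<le> a} - {\<omega>\<in>space M. V \<omega> \<le> a - e})"
      using m1 by (intro finite_measure_mono[OF sub]) (intro sets.Diff)
    also have "\<dots> = prob {\<omega>\<in>space M. V \<omega> \<le> a} - prob {\<omega>\<in>space M. V \<omega> \<le> a - e}"
      by (rule finite_measure_Diff[OF m1 m1]) (use e in auto)
    also have "prob {\<omega>\<in>space M. V \<omega> \<le> a} = a" by (rule unif_all[OF V u]) (use a in auto)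
    also have "prob {\<omega>\<in>space M. V \<omega> \<le> a - e} = a - e" by (rule unif_all[OF V u]) (use a e True in auto)
    finally show ?thesis by simp
  next
    case False
    have "prob {\<omega>\<in>space M. V \<omega> = a} \<le> prob {\<omega>\<in>space M. V \<omega> \<le> a}"
      by (rule finite_measure_mono[OF _ m1]) auto
    also have "\<dots> = a" by (rule unif_all[OF V u]) (use a in auto)
    finally show ?thesis using False by simp
  qed
  then have "prob {\<omega>\<in>space M. V \<omega> = a} \<le> 0 + 0" by (rule field_le_epsilon) simp
  then show ?thesis using measure_nonneg[of M "{\<omega>\<in>space M. V \<omega> = a}"] by linarith
qed

lemma piece:
  fixes V W :: "'a \<Rightarrow> real"
  assumes Vm: "V \<in> borel_measurable M" and V: "\<forall>\<omega>\<in>space M. 0 \<le> V \<omega> \<and> V \<omega> \<le> 1"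
    and u: "\<forall>t. 0 \<le> t \<and> t < 1 \<longrightarrow> prob {\<omega>\<in>space M. V \<omega> \<le> t} = t"
    and Wm: "W \<in> borel_measurable M"
    and c: "0 \<le> c" "0 \<le> l" "c + l \<le> 1"
    and C: "C \<in> sets borel"
  shows "prob {\<omega>\<in>space M. c < V \<omega> \<and> V \<omega> \<le> c + l \<and> qf (rv_cdf M W) ((V \<omega> - c) / l) \<in> C}
       = l * prob {\<omega>\<in>space M. W \<omega> \<in> C}"
proof (cases "l = 0")
  case True
  then have e: "{\<omega>\<in>space M. c < V \<omega> \<and> V \<omega> \<le> c + l \<and> qf (rv_cdf M W) ((V \<omega> - c) / l) \<in> C} = {}" by auto
  show ?thesis unfolding e using True by simp
next
  case False
  then have l: "0 < l" using c by simp
  note Vm[measurable] Wm[measurable]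
  define F where "F = rv_cdf M W"
  have Fcdf: "is_cdf F" using rv_cdf_is_cdf[OF prob_space_axioms Wm] unfolding F_def cdf_set_def by simp
  have qfm[measurable]: "qf F \<in> borel_measurable borel" by (rule qf_measurable[OF Fcdf])
  define A where "A = {\<omega>\<in>space M. c < V \<omega> \<and> V \<omega> \<le> c + l}"
  have A[measurable]: "A \<in> sets M" unfolding A_def using Vm by measurable
  define g where "g = (\<lambda>\<omega>. qf F ((V \<omega> - c) / l))"
  have gm[measurable]: "g \<in> borel_measurable M" unfolding g_def using Vm by measurable
  define N1 where "N1 = distr (restrict_space M A) borel g"
  define N2 where "N2 = scale_measure (ennreal l) (distr M borel W)"
  have N1C: "measure N1 B = prob {\<omega>\<in>space M. \<omega> \<in> A \<and> g \<omega> \<in> B}" if B: "B \<in> sets borel" for B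
  proof -
    have gm': "g \<in> measurable (restrict_space M A) borel" by (rule measurable_restrict_space1[OF gm])
    have "measure N1 B = measure (restrict_space M A) (g -` B \<inter> space (restrict_space M A))"
      unfolding N1_def using gm' B by (rule measure_distr)
    also have "g -` B \<inter> space (restrict_space M A) = {\<omega>\<in>space M. \<omega> \<in> A \<and> g \<omega> \<in> B}"
      using sets.sets_into_space[OF A] by (auto simp: space_restrict_space)
    also have "measure (restrict_space M A) \<dots> = prob {\<omega>\<in>space M. \<omega> \<in> A \<and> g \<omega> \<in> B}"
      using A by (intro measure_restrict_space) auto
    finally show ?thesis .
  qed
  have N2C: "measure N2 B = l * prob {\<omega>\<in>space M. W \<omega> \<in> B}" if B: "B \<in> sets borel" for B
  proof -
    have "measure N2 B = l * measure (distr M borel W) B" unfolding N2_def using l by simp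
    also have "measure (distr M borel W) B = prob (W -` B \<inter> space M)" using Wm B by (rule measure_distr)
    also have "W -` B \<inter> space M = {\<omega>\<in>space M. W \<omega> \<in> B}" by auto
    finally show ?thesis .
  qed
  have fb1: "finite_borel_measure N1"
  proof -
    have "finite_measure (restrict_space M A)"
      using A by (intro finite_measure_restrict_space) (auto simp: finite_measure_axioms)
    then have "finite_measure N1" unfolding N1_def
      by (rule finite_measure.finite_measure_distr) (rule measurable_restrict_space1[OF gm])
    then show ?thesis unfolding finite_borel_measure_def finite_borel_measure_axioms_def N1_def by simp
  qed
  have fb2: "finite_borel_measure N2"
  proof -
    have "finite_measure (distr M borel W)" using Wm by (intro finite_measure_distr) auto
    then have "finite_measure N2" unfolding N2_def
      by (intro finite_measureI) (simp add: ennreal_mult_eq_top_iff finite_measure.emeasure_finite)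
    then show ?thesis unfolding finite_borel_measure_def finite_borel_measure_axioms_def N2_def by simp
  qed
  have Z0: "prob {\<omega>\<in>space M. V \<omega> = c + l} = 0"
    using unif_point[OF Vm V u] l c by simp
  have "cdf N1 = cdf N2"
  proof
    fix w
    define S1 where "S1 = {\<omega>\<in>space M. \<omega> \<in> A \<and> g \<omega> \<in> {..w}}"
    define S2 where "S2 = {\<omega>\<in>space M. c < V \<omega> \<and> V \<omega> \<le> c + l * F w}"
    define Z where "Z = {\<omega>\<in>space M. V \<omega> = c + l}"
    have F01: "0 \<le> F w" "F w \<le> 1" unfolding F_def using rv_cdf_le1 rv_cdf_nonneg by auto
    have key: "\<omega> \<in> S1 \<longleftrightarrow> \<omega> \<in> S2" if "\<omega> \<in> space M" "\<omega> \<notin> Z" for \<omega>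
    proof -
      have ne: "V \<omega> \<noteq> c + l" using that unfolding Z_def by auto
      show ?thesis
      proof (cases "c < V \<omega> \<and> V \<omega> < c + l")
        case True
        have u0: "0 < (V \<omega> - c) / l" "(V \<omega> - c) / l < 1" using True l by (auto simp: field_simps)
        have "g \<omega> \<le> w \<longleftrightarrow> (V \<omega> - c) / l \<le> F w" unfolding g_def by (rule qf_galois[OF Fcdf u0])
        also have "\<dots> \<longleftrightarrow> V \<omega> \<le> c + l * F w" using l by (auto simp: field_simps)
        finally show ?thesis unfolding S1_def S2_def A_def using True that by auto
      next
        case False
        then have "\<not> (c < V \<omega> \<and> V \<omega> \<le> c + l)" using ne by auto
        moreover have "c + l * F w \<le> c + l" using F01 l by (simp add: mult_left_le)
        ultimately show ?thesis unfolding S1_def S2_def A_def by auto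
      qed
    qed
    have S1m: "S1 \<in> sets M" unfolding S1_def by measurable
    have S2m: "S2 \<in> sets M" unfolding S2_def by measurable
    have Zm: "Z \<in> sets M" unfolding Z_def by measurable
    have "prob S1 \<le> prob (S2 \<union> Z)" using key by (intro finite_measure_mono) (auto simp: S1_def Z_def S2m Zm)
    also have "\<dots> \<le> prob S2 + prob Z" using S2m Zm by (rule measure_subadditive) auto
    finally have le1: "prob S1 \<le> prob S2" using Z0 unfolding Z_def by simp
    have "prob S2 \<le> prob (S1 \<union> Z)" using key by (intro finite_measure_mono) (auto simp: S2_def Z_def S1m Zm)
    also have "\<dots> \<le> prob S1 + prob Z" using S1m Zm by (rule measure_subadditive) auto
    finally have le2: "prob S2 \<le> prob S1" using Z0 unfolding Z_def by simp
    have "prob S2 = prob ({\<omega>\<in>space M. V \<omega> \<le> c + l * F w} - {\<omega>\<in>space M. V \<omega> \<le> c})"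
      unfolding S2_def by (rule arg_cong[where f=prob]) auto
    also have "\<dots> = prob {\<omega>\<in>space M. V \<omega> \<le> c + l * F w} - prob {\<omega>\<in>space M. V \<omega> \<le> c}"
    proof (rule finite_measure_Diff)
      have "0 \<le> l * F w" using F01 l by simp
      then show "{\<omega>\<in>space M. V \<omega> \<le> c} \<subseteq> {\<omega>\<in>space M. V \<omega> \<le> c + l * F w}" by auto
    qed measurable
    also have "\<dots> = (c + l * F w) - c"
    proof -
      have "l * F w \<le> l" using F01 l by (simp add: mult_left_le)
      then have "c + l * F w \<le> 1" using c by linarith
      then have "prob {\<omega>\<in>space M. V \<omega> \<le> c + l * F w} = c + l * F w"
        by (intro unif_all[OF V u]) (use c F01 l in \<open>auto intro: add_nonneg_nonneg\<close>)
      moreover have "prob {\<omega>\<in>space M. V \<omega> \<le> c} = c"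
        by (intro unif_all[OF V u]) (use c l in auto)
      ultimately show ?thesis by simp
    qed
    finally have "prob S2 = l * F w" by simp
    then have "prob S1 = l * F w" using le1 le2 by simp
    then have "cdf N1 w = l * F w" unfolding cdf_def N1C[OF atMost_borel] S1_def[symmetric] by simp
    moreover have "cdf N2 w = l * F w" unfolding cdf_def N2C[OF atMost_borel] F_def rv_cdf_def by simp
    ultimately show "cdf N1 w = cdf N2 w" by simp
  qed
  then have "N1 = N2" using fb1 fb2 cdf_unique' by blast
  then have "measure N1 C = measure N2 C" by simp
  then show ?thesis unfolding N1C[OF C] N2C[OF C] unfolding A_def g_def F_def by simp
qed

end


context prob_space begin

lemma null_equiv:
  assumes "S1 \<in> sets M" "S2 \<in> sets M" "Z \<in> sets M" "prob Z = 0"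
    and "\<And>\<omega>. \<omega> \<in> space M \<Longrightarrow> \<omega> \<notin> Z \<Longrightarrow> \<omega> \<in> S1 \<longleftrightarrow> \<omega> \<in> S2"
    and "S1 \<subseteq> space M" "S2 \<subseteq> space M"
  shows "prob S1 = prob S2"
proof -
  have "prob S1 \<le> prob (S2 \<union> Z)" using assms by (intro finite_measure_mono) auto
  also have "\<dots> \<le> prob S2 + prob Z" using assms by (intro measure_subadditive) auto
  finally have 1: "prob S1 \<le> prob S2" using assms by simp
  have "prob S2 \<le> prob (S1 \<union> Z)" using assms by (intro finite_measure_mono) auto
  also have "\<dots> \<le> prob S1 + prob Z" using assms by (intro measure_subadditive) auto
  finally have 2: "prob S2 \<le> prob S1" using assms by simp
  show ?thesis using 1 2 by simp
qed

lemma mixture: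
  fixes V Wv :: "'a \<Rightarrow> real" and w :: "nat \<Rightarrow> real" and \<psi> :: "nat \<Rightarrow> real \<Rightarrow> real"
  assumes Vm[measurable]: "V \<in> borel_measurable M" and V: "\<forall>\<omega>\<in>space M. 0 \<le> V \<omega> \<and> V \<omega> \<le> 1"
    and u: "\<forall>t. 0 \<le> t \<and> t < 1 \<longrightarrow> prob {\<omega>\<in>space M. V \<omega> \<le> t} = t"
    and Wm[measurable]: "Wv \<in> borel_measurable M"
    and w: "\<And>k. k < m \<Longrightarrow> 0 \<le> w k" "(\<Sum>k<m. w k) = 1"
    and psi[measurable]: "\<And>k. \<psi> k \<in> borel_measurable borel"
  shows "prob {\<omega>\<in>space M. (\<Sum>k<m. if (\<Sum>l<k. w l) < V \<omega> \<and> V \<omega> \<le> (\<Sum>l<k. w l) + w k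
            then \<psi> k (qf (rv_cdf M Wv) ((V \<omega> - (\<Sum>l<k. w l)) / w k)) else 0) \<le> x}
       = (\<Sum>k<m. w k * prob {\<omega>\<in>space M. \<psi> k (Wv \<omega>) \<le> x})"
proof -
  define cc where "cc = (\<lambda>k. \<Sum>l<k. w l)"
  define qW where "qW = qf (rv_cdf M Wv)"
  have Fcdf: "is_cdf (rv_cdf M Wv)" using rv_cdf_is_cdf[OF prob_space_axioms Wm] unfolding cdf_set_def by simp
  have qWm[measurable]: "qW \<in> borel_measurable borel" unfolding qW_def by (rule qf_measurable[OF Fcdf])
  define A where "A = (\<lambda>k. {\<omega>\<in>space M. cc k < V \<omega> \<and> V \<omega> \<le> cc k + w k})"
  define Q where "Q = (\<lambda>\<omega>. (\<Sum>k<m. if cc k < V \<omega> \<and> V \<omega> \<le> cc k + w k then \<psi> k (qW ((V \<omega> - cc k) / w k)) else 0))"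
  have Qm[measurable]: "Q \<in> borel_measurable M" unfolding Q_def by measurable
  have Am[measurable]: "A k \<in> sets M" for k unfolding A_def by measurable
  have ccSuc: "cc (Suc k) = cc k + w k" for k unfolding cc_def by simp
  have ccmono: "cc k \<le> cc k'" if "k \<le> k'" "k' \<le> m" for k k'
    unfolding cc_def using that w(1) by (intro sum_mono2) auto
  have cc0: "0 \<le> cc k" if "k \<le> m" for k unfolding cc_def using that w(1) by (intro sum_nonneg) auto
  have ccm: "cc m = 1" unfolding cc_def using w(2) .
  have disj: "\<omega> \<notin> A k'" if "\<omega> \<in> A k" "k < m" "k' < m" "k \<noteq> k'" for \<omega> k k'
  proof (cases "k < k'")
    case True
    then have "cc (Suc k) \<le> cc k'" using that by (intro ccmono) auto
    then show ?thesis using that unfolding A_def ccSuc by auto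
  next
    case False
    then have "cc (Suc k') \<le> cc k" using that by (intro ccmono) auto
    then show ?thesis using that unfolding A_def ccSuc by auto
  qed
  have onA: "Q \<omega> = \<psi> k (qW ((V \<omega> - cc k) / w k))" if "\<omega> \<in> A k" "k < m" for \<omega> k
  proof -
    have "Q \<omega> = (if cc k < V \<omega> \<and> V \<omega> \<le> cc k + w k then \<psi> k (qW ((V \<omega> - cc k) / w k)) else 0)
       + (\<Sum>k'\<in>{..<m} - {k}. if cc k' < V \<omega> \<and> V \<omega> \<le> cc k' + w k' then \<psi> k' (qW ((V \<omega> - cc k') / w k')) else 0)"
      unfolding Q_def using that(2) by (subst sum.remove[of _ k]) auto
    also have "(\<Sum>k'\<in>{..<m} - {k}. if cc k' < V \<omega> \<and> V \<omega> \<le> cc k' + w k' then \<psi> k' (qW ((V \<omega> - cc k') / w k')) else 0) = 0"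
    proof (rule sum.neutral, intro ballI)
      fix k' assume k': "k' \<in> {..<m} - {k}"
      then have "\<omega> \<notin> A k'" using disj[OF that(1) that(2)] by auto
      then show "(if cc k' < V \<omega> \<and> V \<omega> \<le> cc k' + w k' then \<psi> k' (qW ((V \<omega> - cc k') / w k')) else 0) = 0"
        using that(1) unfolding A_def by auto
    qed
    finally show ?thesis using that(1) unfolding A_def by simp
  qed
  have cover: "\<exists>k<m. \<omega> \<in> A k" if "\<omega> \<in> space M" "0 < V \<omega>" for \<omega>
  proof -
    define K where "K = {k. k < m \<and> cc k < V \<omega>}"
    have m0: "0 < m" using w(2) by (cases m) auto
    have "0 \<in> K" unfolding K_def cc_def using that m0 by simp
    have finK: "finite K" unfolding K_def by auto
    define k where "k = Max K"
    have kK: "k \<in> K" unfolding k_def using finK \<open>0 \<in> K\<close> by (intro Max_in) auto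
    have "V \<omega> \<le> cc (Suc k)"
    proof (cases "Suc k < m")
      case True
      then have "Suc k \<notin> K" using Max_ge[OF finK, of "Suc k"] unfolding k_def by auto
      then show ?thesis using True unfolding K_def by auto
    next
      case False
      then have "Suc k = m" using kK unfolding K_def by auto
      then show ?thesis using ccm V that by auto
    qed
    then have "\<omega> \<in> A k" using kK that unfolding A_def K_def ccSuc by auto
    then show ?thesis using kK unfolding K_def by auto
  qed
  define S where "S = {\<omega>\<in>space M. Q \<omega> \<le> x}"
  have Sm[measurable]: "S \<in> sets M" unfolding S_def by measurable
  have Z0: "prob {\<omega>\<in>space M. V \<omega> \<le> 0} = 0" using u by simp
  have "prob S = prob (\<Union>k\<in>{..<m}. S \<inter> A k)"
  proof (rule null_equiv[where Z = "{\<omega>\<in>space M. V \<omega> \<le> 0}"])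
    fix \<omega> assume "\<omega> \<in> space M" "\<omega> \<notin> {\<omega>\<in>space M. V \<omega> \<le> 0}"
    then obtain k where "k < m" "\<omega> \<in> A k" using cover[of \<omega>] by force
    then show "\<omega> \<in> S \<longleftrightarrow> \<omega> \<in> (\<Union>k\<in>{..<m}. S \<inter> A k)" by auto
  qed (use Z0 in \<open>auto simp: S_def\<close>)
  also have "\<dots> = (\<Sum>k<m. prob (S \<inter> A k))"
  proof (rule finite_measure_finite_Union)
    show "disjoint_family_on (\<lambda>k. S \<inter> A k) {..<m}"
      unfolding disjoint_family_on_def using disj by blast
  qed auto
  also have "\<dots> = (\<Sum>k<m. w k * prob {\<omega>\<in>space M. \<psi> k (Wv \<omega>) \<le> x})"
  proof (rule sum.cong[OF refl])
    fix k assume k: "k \<in> {..<m}"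
    define C where "C = \<psi> k -` {..x}"
    have C: "C \<in> sets borel" unfolding C_def using measurable_sets[OF psi[of k] atMost_borel[of x]] by simp
    have "S \<inter> A k = {\<omega>\<in>space M. cc k < V \<omega> \<and> V \<omega> \<le> cc k + w k \<and> qf (rv_cdf M Wv) ((V \<omega> - cc k) / w k) \<in> C}"
      using onA[OF _ k[simplified]] unfolding S_def C_def qW_def by (auto simp: A_def)
    also have "prob \<dots> = w k * prob {\<omega>\<in>space M. Wv \<omega> \<in> C}"
    proof (rule piece[OF Vm V u Wm _ _ _ C])
      show "0 \<le> cc k" using k by (intro cc0) auto
      show "0 \<le> w k" using k w(1) by auto
      have "cc (Suc k) \<le> cc m" using k by (intro ccmono) auto
      then show "cc k + w k \<le> 1" using ccm ccSuc by simp
    qed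
    also have "{\<omega>\<in>space M. Wv \<omega> \<in> C} = {\<omega>\<in>space M. \<psi> k (Wv \<omega>) \<le> x}" unfolding C_def by auto
    finally show "prob (S \<inter> A k) = w k * prob {\<omega>\<in>space M. \<psi> k (Wv \<omega>) \<le> x}" .
  qed
  finally show ?thesis unfolding S_def Q_def cc_def qW_def .
qed

end


lemma pq_pc: "0 < \<alpha> \<Longrightarrow> 0 < \<theta> \<Longrightarrow> \<theta> \<le> x \<Longrightarrow> pq \<alpha> \<theta> (pareto_cdf \<alpha> \<theta> x) = x"
  using le_pq_iff[of \<alpha> \<theta> "pareto_cdf \<alpha> \<theta> x" x] pq_le_iff[of \<alpha> \<theta> "pareto_cdf \<alpha> \<theta> x" x]
    pc_nonneg[of \<alpha> \<theta> x] pc_less1[of \<alpha> \<theta> x] by auto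

lemma pc_measurable[measurable]: "0 < \<alpha> \<Longrightarrow> 0 < \<theta> \<Longrightarrow> pareto_cdf \<alpha> \<theta> \<in> borel_measurable borel"
  by (intro borel_measurable_mono) (auto simp: mono_def intro: pc_mono)

lemma I1_agg:
  assumes M: "prob_space M" and a: "0 < \<alpha>" and th: "\<forall>i<n. 0 < \<theta> i"
    and ds: "doubly_stochastic n \<Lambda>"
  shows "agg_set M n (pareto_tuple \<alpha> \<theta>) \<subseteq> agg_set M n (mat_cdfs n \<Lambda> (pareto_tuple \<alpha> \<theta>))"
proof
  interpret prob_space M by (rule M)
  fix H assume "H \<in> agg_set M n (pareto_tuple \<alpha> \<theta>)"
  then obtain X where H: "H = rv_cdf M (\<lambda>\<omega>. \<Sum>i<n. X i \<omega>)"
    and Xm: "\<And>i. i < n \<Longrightarrow> X i \<in> borel_measurable M"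
    and Xc: "\<And>i. i < n \<Longrightarrow> rv_cdf M (X i) = pareto_tuple \<alpha> \<theta> i"
    unfolding agg_set_def by auto
  show "H \<in> agg_set M n (mat_cdfs n \<Lambda> (pareto_tuple \<alpha> \<theta>))"
  proof (cases "n = 0")
    case True
    then show ?thesis unfolding agg_set_def H by auto
  next
    case False
    then have n0: "0 < n" by simp
    define F where "F = (\<lambda>j. pareto_cdf \<alpha> (\<theta> j))"
    have XcF: "\<And>j. j < n \<Longrightarrow> rv_cdf M (X j) = F j" using Xc unfolding F_def pareto_tuple_def by auto
    have Fm[measurable]: "\<And>j. j < n \<Longrightarrow> F j \<in> borel_measurable borel" unfolding F_def using a th by auto
    define U where "U = (\<lambda>j \<omega>. if j < n then F j (X j \<omega>) else 0)"
    have Um[measurable]: "U j \<in> borel_measurable M" for j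
      by (cases "j < n") (use Xm Fm in \<open>auto simp: U_def\<close>)
    have U01: "0 \<le> U j \<omega> \<and> U j \<omega> < 1" for j \<omega>
      unfolding U_def F_def using pc_nonneg pc_less1 a th by auto
    define Wv where "Wv = (\<lambda>\<omega>. enc n (\<lambda>j. U j \<omega>))"
    have Wm[measurable]: "Wv \<in> borel_measurable M" unfolding Wv_def by (rule enc_measurable) (rule Um)
    have decW: "\<And>j \<omega>. j < n \<Longrightarrow> dec n j (Wv \<omega>) = U j \<omega>"
      unfolding Wv_def using U01 by (intro dec_enc) auto
    have U0u: "\<forall>t. 0 \<le> t \<and> t < 1 \<longrightarrow> prob {\<omega>\<in>space M. U 0 \<omega> \<le> t} = t"
    proof (intro allI impI)
      fix t :: real assume t: "0 \<le> t \<and> t < 1"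
      have "isCont (rv_cdf M (X 0)) x" for x unfolding XcF[OF n0] F_def using pc_cont a th n0 by auto
      then have "prob {\<omega>\<in>space M. rv_cdf M (X 0) (X 0 \<omega>) \<le> t} = t" using pit[OF Xm[OF n0]] t by auto
      then show "prob {\<omega>\<in>space M. U 0 \<omega> \<le> t} = t" unfolding U_def XcF[OF n0] using n0 by simp
    qed
    have U0pt: "prob {\<omega>\<in>space M. U 0 \<omega> = c} = 0" for c
    proof (cases "0 < c \<and> c \<le> 1")
      case True
      have "\<forall>\<omega>\<in>space M. 0 \<le> U 0 \<omega> \<and> U 0 \<omega> \<le> 1" using U01 by (auto intro: less_imp_le)
      from unif_point[OF Um this U0u] True show ?thesis by auto
    next
      case False
      then show ?thesis
      proof (cases "c \<le> 0")
        case True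
        have "prob {\<omega>\<in>space M. U 0 \<omega> = c} \<le> prob {\<omega>\<in>space M. U 0 \<omega> \<le> 0}"
          using True by (intro finite_measure_mono) auto
        also have "\<dots> = 0" using U0u by simp
        finally show ?thesis by (simp add: measure_le_0_iff)
      next
        case False
        have "U 0 \<omega> \<noteq> c" for \<omega> using False \<open>\<not> (0 < c \<and> c \<le> 1)\<close> U01[of 0 \<omega>] by auto
        then have e: "{\<omega>\<in>space M. U 0 \<omega> = c} = {}" by auto
        show ?thesis unfolding e by simp
      qed
    qed
    define FW where "FW = rv_cdf M Wv"
    have FWcdf: "is_cdf FW" unfolding FW_def using rv_cdf_is_cdf[OF M Wm] unfolding cdf_set_def by simp
    have FWcont: "isCont FW y" for y
    proof -
      interpret D: real_distribution "distr M borel Wv" using Wm by simp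
      have "measure (distr M borel Wv) {y} = prob (Wv -` {y} \<inter> space M)" using Wm by (intro measure_distr) auto
      also have "\<dots> \<le> prob {\<omega>\<in>space M. U 0 \<omega> = dec n 0 y}"
        using decW[OF n0] by (intro finite_measure_mono) auto
      also have "\<dots> = 0" by (rule U0pt)
      finally have "measure (distr M borel Wv) {y} = 0" by (simp add: measure_le_0_iff)
      then show ?thesis unfolding FW_def rv_cdf_eq_cdf[OF Wm] using D.isCont_cdf by simp
    qed
    define V where "V = (\<lambda>\<omega>. FW (Wv \<omega>))"
    have FWm[measurable]: "FW \<in> borel_measurable borel"
      using FWcdf unfolding is_cdf_def by (intro borel_measurable_mono) auto
    have Vm[measurable]: "V \<in> borel_measurable M" unfolding V_def by measurable
    have V01: "\<forall>\<omega>\<in>space M. 0 \<le> V \<omega> \<and> V \<omega> \<le> 1" unfolding V_def FW_def using rv_cdf_nonneg rv_cdf_le1 by auto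
    have Vu: "\<forall>t. 0 \<le> t \<and> t < 1 \<longrightarrow> prob {\<omega>\<in>space M. V \<omega> \<le> t} = t"
      unfolding V_def FW_def using pit[OF Wm] FWcont unfolding FW_def by auto
    have Lnn: "\<forall>i<n. \<forall>j<n. 0 \<le> \<Lambda> i j" and Lrow: "\<forall>i<n. (\<Sum>j<n. \<Lambda> i j) = 1"
      and Lcol: "\<forall>j<n. (\<Sum>i<n. \<Lambda> i j) = 1" using ds unfolding doubly_stochastic_def by auto
    obtain m :: nat and w p where wp: "\<forall>k<m. 0 \<le> w k \<and> bij_betw (p k) {..<n} {..<n}"
      "\<forall>i<n. \<forall>j<n. \<Lambda> i j = (\<Sum>k<m. w k * (if p k i = j then 1 else 0))"
      using birkhoff[OF Lnn Lrow Lcol] by blast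
    have pk: "\<And>k i. k < m \<Longrightarrow> i < n \<Longrightarrow> p k i < n" using wp(1) bij_betwE by blast
    have sumw: "(\<Sum>k<m. w k) = 1"
    proof -
      have "1 = (\<Sum>j<n. \<Lambda> 0 j)" using Lrow n0 by simp
      also have "\<dots> = (\<Sum>j<n. \<Sum>k<m. w k * (if p k 0 = j then 1 else 0))" using wp(2) n0 by simp
      also have "\<dots> = (\<Sum>k<m. \<Sum>j<n. w k * (if p k 0 = j then 1 else 0))" by (rule sum.swap)
      also have "\<dots> = (\<Sum>k<m. w k)"
      proof (rule sum.cong[OF refl])
        fix k assume k: "k \<in> {..<m}"
        have "(\<Sum>j<n. w k * (if p k 0 = j then 1 else 0)) = (\<Sum>j<n. if p k 0 = j then w k else 0)"
          by (rule sum.cong) auto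
        also have "\<dots> = w k" using pk[of k 0] k n0 by (simp add: sum.delta sum.delta')
        finally show "(\<Sum>j<n. w k * (if p k 0 = j then 1 else 0)) = w k" .
      qed
      finally show ?thesis by simp
    qed
    define \<Phi> where "\<Phi> = (\<lambda>j y. pq \<alpha> (\<theta> j) (dec n j y))"
    have \<Phi>m[measurable]: "\<Phi> j \<in> borel_measurable borel" for j unfolding \<Phi>_def by measurable
    have phi_cdf: "prob {\<omega>\<in>space M. \<Phi> j (Wv \<omega>) \<le> x} = F j x" if j: "j < n" for j x
    proof (cases "\<theta> j \<le> x")
      case True
      have "{\<omega>\<in>space M. \<Phi> j (Wv \<omega>) \<le> x} = {\<omega>\<in>space M. X j \<omega> \<le> x}"
      proof -
        have "\<Phi> j (Wv \<omega>) \<le> x \<longleftrightarrow> X j \<omega> \<le> x" for \<omega>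
        proof -
          have "\<Phi> j (Wv \<omega>) = pq \<alpha> (\<theta> j) (F j (X j \<omega>))" unfolding \<Phi>_def decW[OF j] U_def using j by simp
          moreover have "pq \<alpha> (\<theta> j) (F j (X j \<omega>)) \<le> x \<longleftrightarrow> F j (X j \<omega>) \<le> F j x"
            unfolding F_def using pq_le_iff[of \<alpha> "\<theta> j" _ x] pc_nonneg pc_less1 a th j True by auto
          moreover have "F j (X j \<omega>) \<le> F j x \<longleftrightarrow> X j \<omega> \<le> x"
            unfolding F_def using pc_le_iff a th j True by auto
          ultimately show ?thesis by simp
        qed
        then show ?thesis by auto
      qed
      then show ?thesis using XcF[OF j] unfolding rv_cdf_def by metis
    next
      case False
      have "x < \<Phi> j (Wv \<omega>)" for \<omega>
      proof -
        have "\<theta> j \<le> \<Phi> j (Wv \<omega>)" unfolding \<Phi>_def decW[OF j] using pq_ge[of \<alpha> "\<theta> j"] a th j U01 by auto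
        then show ?thesis using False by simp
      qed
      then have e: "{\<omega>\<in>space M. \<Phi> j (Wv \<omega>) \<le> x} = {}" by (auto simp: not_le[symmetric])
      have "F j x = 0" unfolding F_def using pc_zero[of \<alpha> "\<theta> j" x] a th j False by simp
      then show ?thesis unfolding e by simp
    qed
    define Y where "Y = (\<lambda>i \<omega>. (\<Sum>k<m. if (\<Sum>l<k. w l) < V \<omega> \<and> V \<omega> \<le> (\<Sum>l<k. w l) + w k
            then \<Phi> (p k i) (qf (rv_cdf M Wv) ((V \<omega> - (\<Sum>l<k. w l)) / w k)) else 0))"
    have qfm[measurable]: "qf (rv_cdf M Wv) \<in> borel_measurable borel"
      using qf_measurable FWcdf unfolding FW_def by blast
    have Ym: "Y i \<in> borel_measurable M" for i unfolding Y_def by measurable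
    have wnn: "\<And>k. k < m \<Longrightarrow> 0 \<le> w k" using wp(1) by auto
    have Yc: "rv_cdf M (Y i) = mat_cdfs n \<Lambda> (pareto_tuple \<alpha> \<theta>) i" if i: "i < n" for i
    proof
      fix x
      have "rv_cdf M (Y i) x = prob {\<omega>\<in>space M. Y i \<omega> \<le> x}" unfolding rv_cdf_def ..
      also have "\<dots> = (\<Sum>k<m. w k * prob {\<omega>\<in>space M. \<Phi> (p k i) (Wv \<omega>) \<le> x})"
        unfolding Y_def
        by (rule mixture[OF Vm V01 Vu Wm wnn sumw, where \<psi>="\<lambda>k. \<Phi> (p k i)"]) (auto simp: \<Phi>m)
      also have "\<dots> = (\<Sum>k<m. w k * F (p k i) x)"
        by (rule sum.cong[OF refl]) (use phi_cdf pk i in auto)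
      also have "\<dots> = (\<Sum>k<m. \<Sum>j<n. w k * (if p k i = j then 1 else 0) * F j x)"
      proof (rule sum.cong[OF refl])
        fix k assume k: "k \<in> {..<m}"
        have "(\<Sum>j<n. w k * (if p k i = j then 1 else 0) * F j x) = (\<Sum>j<n. if p k i = j then w k * F j x else 0)"
          by (rule sum.cong) auto
        also have "\<dots> = w k * F (p k i) x" using pk[of k i] k i by (simp add: sum.delta sum.delta')
        finally show "w k * F (p k i) x = (\<Sum>j<n. w k * (if p k i = j then 1 else 0) * F j x)" by simp
      qed
      also have "\<dots> = (\<Sum>j<n. \<Sum>k<m. w k * (if p k i = j then 1 else 0) * F j x)" by (rule sum.swap)
      also have "\<dots> = (\<Sum>j<n. \<Lambda> i j * F j x)"
        using wp(2) i by (intro sum.cong[OF refl]) (auto simp: sum_distrib_right)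
      finally show "rv_cdf M (Y i) x = mat_cdfs n \<Lambda> (pareto_tuple \<alpha> \<theta>) i x"
        unfolding mat_cdfs_def pareto_tuple_def F_def by simp
    qed
    define \<Psi> where "\<Psi> = (\<lambda>y. \<Sum>j<n. \<Phi> j y)"
    have \<Psi>m[measurable]: "\<Psi> \<in> borel_measurable borel" unfolding \<Psi>_def by measurable
    have Ysum: "(\<Sum>i<n. Y i \<omega>) = (\<Sum>k<m. if (\<Sum>l<k. w l) < V \<omega> \<and> V \<omega> \<le> (\<Sum>l<k. w l) + w k
            then (\<lambda>k. \<Psi>) k (qf (rv_cdf M Wv) ((V \<omega> - (\<Sum>l<k. w l)) / w k)) else 0)" for \<omega>
    proof -
      have "(\<Sum>i<n. Y i \<omega>) = (\<Sum>k<m. \<Sum>i<n. if (\<Sum>l<k. w l) < V \<omega> \<and> V \<omega> \<le> (\<Sum>l<k. w l) + w k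
            then \<Phi> (p k i) (qf (rv_cdf M Wv) ((V \<omega> - (\<Sum>l<k. w l)) / w k)) else 0)"
        unfolding Y_def by (rule sum.swap)
      also have "\<dots> = (\<Sum>k<m. if (\<Sum>l<k. w l) < V \<omega> \<and> V \<omega> \<le> (\<Sum>l<k. w l) + w k
            then \<Psi> (qf (rv_cdf M Wv) ((V \<omega> - (\<Sum>l<k. w l)) / w k)) else 0)"
      proof (rule sum.cong[OF refl])
        fix k assume k: "k \<in> {..<m}"
        have "(\<Sum>i<n. \<Phi> (p k i) z) = \<Psi> z" for z
          unfolding \<Psi>_def using sum.reindex_bij_betw[of "p k" "{..<n}" "{..<n}" "\<lambda>j. \<Phi> j z"] wp(1) k by auto
        then show "(\<Sum>i<n. if (\<Sum>l<k. w l) < V \<omega> \<and> V \<omega> \<le> (\<Sum>l<k. w l) + w k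
            then \<Phi> (p k i) (qf (rv_cdf M Wv) ((V \<omega> - (\<Sum>l<k. w l)) / w k)) else 0) =
           (if (\<Sum>l<k. w l) < V \<omega> \<and> V \<omega> \<le> (\<Sum>l<k. w l) + w k
            then \<Psi> (qf (rv_cdf M Wv) ((V \<omega> - (\<Sum>l<k. w l)) / w k)) else 0)" (is "?L = ?R")
        proof -
          have gen: "(\<Sum>i<n. if b then f i else 0) = (if b then (\<Sum>i<n. f i) else 0)" for b and f :: "nat \<Rightarrow> real"
            by (cases b) simp_all
          show ?thesis unfolding gen using \<open>\<And>z. (\<Sum>i<n. \<Phi> (p k i) z) = \<Psi> z\<close> by simp
        qed
      qed
      finally show ?thesis by simp
    qed
    have sumcdf: "rv_cdf M (\<lambda>\<omega>. \<Sum>i<n. Y i \<omega>) = rv_cdf M (\<lambda>\<omega>. \<Sum>i<n. X i \<omega>)"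
    proof
      fix x
      have "rv_cdf M (\<lambda>\<omega>. \<Sum>i<n. Y i \<omega>) x = prob {\<omega>\<in>space M. (\<Sum>i<n. Y i \<omega>) \<le> x}"
        unfolding rv_cdf_def ..
      also have "\<dots> = (\<Sum>k<m. w k * prob {\<omega>\<in>space M. \<Psi> (Wv \<omega>) \<le> x})"
        unfolding Ysum
        by (rule mixture[OF Vm V01 Vu Wm wnn sumw, where \<psi>="\<lambda>k. \<Psi>"]) (auto simp: \<Psi>m)
      also have "\<dots> = prob {\<omega>\<in>space M. \<Psi> (Wv \<omega>) \<le> x}" using sumw by (simp add: sum_distrib_right[symmetric])
      also have "\<dots> = prob {\<omega>\<in>space M. (\<Sum>i<n. X i \<omega>) \<le> x}"
      proof (rule null_equiv[where Z = "\<Union>j\<in>{..<n}. {\<omega>\<in>space M. X j \<omega> \<le> \<theta> j}"])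
        show "prob (\<Union>j\<in>{..<n}. {\<omega>\<in>space M. X j \<omega> \<le> \<theta> j}) = 0"
        proof -
          have "prob (\<Union>j\<in>{..<n}. {\<omega>\<in>space M. X j \<omega> \<le> \<theta> j}) \<le> (\<Sum>j<n. prob {\<omega>\<in>space M. X j \<omega> \<le> \<theta> j})"
            using Xm by (intro finite_measure_subadditive_finite) auto
          also have "\<dots> = 0"
          proof (rule sum.neutral, intro ballI)
            fix j assume j: "j \<in> {..<n}"
            have "prob {\<omega>\<in>space M. X j \<omega> \<le> \<theta> j} = rv_cdf M (X j) (\<theta> j)" unfolding rv_cdf_def ..
            also have "\<dots> = F j (\<theta> j)" using XcF[of j] j by simp
            also have "\<dots> = 0" unfolding F_def using pc_zero[of \<alpha> "\<theta> j" "\<theta> j"] a th j by simp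
            finally show "prob {\<omega>\<in>space M. X j \<omega> \<le> \<theta> j} = 0" .
          qed
          finally show ?thesis by (simp add: measure_le_0_iff)
        qed
        fix \<omega> assume \<omega>: "\<omega> \<in> space M" "\<omega> \<notin> (\<Union>j\<in>{..<n}. {\<omega>\<in>space M. X j \<omega> \<le> \<theta> j})"
        have "\<Psi> (Wv \<omega>) = (\<Sum>i<n. X i \<omega>)" unfolding \<Psi>_def
        proof (rule sum.cong[OF refl])
          fix j assume j: "j \<in> {..<n}"
          then have "\<theta> j \<le> X j \<omega>" using \<omega> by force
          then show "\<Phi> j (Wv \<omega>) = X j \<omega>" unfolding \<Phi>_def using decW[of j] j pq_pc[of \<alpha> "\<theta> j" "X j \<omega>"] a th
            unfolding U_def F_def by auto
        qed
        then show "\<omega> \<in> {\<omega>\<in>space M. \<Psi> (Wv \<omega>) \<le> x} \<longleftrightarrow> \<omega> \<in> {\<omega>\<in>space M. (\<Sum>i<n. X i \<omega>) \<le> x}" using \<omega> by simp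
      qed (use Xm in auto)
      finally show "rv_cdf M (\<lambda>\<omega>. \<Sum>i<n. Y i \<omega>) x = rv_cdf M (\<lambda>\<omega>. \<Sum>i<n. X i \<omega>) x" unfolding rv_cdf_def .
    qed
    show ?thesis unfolding agg_set_def H
      using Ym Yc sumcdf[symmetric] by blast
  qed
qed


theorem theorem15:
  fixes M :: "'a measure" and \<rho> :: "(real \<Rightarrow> real) \<Rightarrow> real"
    and n :: nat and \<alpha> :: real and \<theta> :: "nat \<Rightarrow> real" and \<Lambda> :: "nat \<Rightarrow> nat \<Rightarrow> real"
  assumes "prob_space M" and "atomless M"
    and "monotone_risk \<rho>"
    and "0 < \<alpha>" and "\<alpha> \<le> 1"
    and "\<forall>i<n. 0 < \<theta> i"
    and "doubly_stochastic n \<Lambda>"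
  shows "worst_rho M \<rho> n (pareto_tuple \<alpha> \<theta>) \<le> worst_rho M \<rho> n (mat_cdfs n \<Lambda> (pareto_tuple \<alpha> \<theta>))
    \<and> worst_rho M \<rho> n (mat_cdfs n \<Lambda> (pareto_tuple \<alpha> \<theta>)) \<le> worst_rho M \<rho> n (pareto_tuple \<alpha> (mat_vec n \<Lambda> \<theta>))"
proof
  show "worst_rho M \<rho> n (pareto_tuple \<alpha> \<theta>) \<le> worst_rho M \<rho> n (mat_cdfs n \<Lambda> (pareto_tuple \<alpha> \<theta>))"
    unfolding worst_rho_def
    by (rule SUP_subset_mono[OF I1_agg[OF assms(1,4,6,7)] order_refl])
  show "worst_rho M \<rho> n (mat_cdfs n \<Lambda> (pareto_tuple \<alpha> \<theta>)) \<le> worst_rho M \<rho> n (pareto_tuple \<alpha> (mat_vec n \<Lambda> \<theta>))"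
    by (rule I2[OF assms(1,3,4,5,6,7)])
qed

end
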